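(* Let $n$ be divisible by $f_Kh_K$, $m=|\mu(K)|$, let $\pi\in W_0^K(p,n)$, and let $\bar\pi\in W_0^K(p^\infty)$ be its image (the class of $\pi^n\in W_0^K(p^n)$). Then the fixed field in $\mathbb{Q}^{\mathrm{al}}$ of the stabilizer $\{\sigma\in\mathrm{Gal}(\mathbb{Q}^{\mathrm{al}}/\mathbb{Q}):\sigma\bar\pi=\bar\pi\}$ equals $\mathbb{Q}[\pi^{mn}]$; equivalently, the centre of $\mathrm{End}(X(\bar\pi))$, where $X(\bar\pi)$ is the simple motive over $\mathbb{F}$ corresponding to $\bar\pi$, is $\mathbb{Q}[\pi^{mn}]$.
   Context: $\mathbb{Q}^{\mathrm{al}}\subset\mathbb{C}$, $p$ prime, $K\subset\mathbb{Q}^{\mathrm{al}}$ a CM field finite Galois over $\mathbb{Q}$, $\mu(K)$ its roots of unity, $f_K$, $h_K$ the common inertia degree and class-group order of the $p$-adic primes of $K$. A Weil $q$-number of weight $0$ ($q$ a power of $p$) is an algebraic $\pi$ with $|\pi'|=1$ for all complex conjugates and $q^N\pi$ integral for some $N$. $n_w(\pi)=\frac{\mathrm{ord}_w(\pi)}{\mathrm{ord}_w(q)}[K_w:\mathbb{Q}_p]$; $W_0^K(q)$ = Weil $q$-numbers of weight $0$ in $K$ with all $n_w\in\mathbb{Z}$; $W_0^K(p^\infty)=\varinjlim W_0^K(p^n)$ (transition maps $\pi\mapsto\pi^{n'/n}$), a Galois module; $W_0^K(p,n)$ = Weil $p$-numbers of weight $0$ with $\pi^n\in W_0^K(p^n)$.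 $\mathbb{Q}[\pi^{mn}]$ is the subfield of $\mathbb{Q}^{\mathrm{al}}$ generated by $\pi^{mn}$. $\mathbb{F}$ is an algebraic closure of $\mathbb{F}_p$; assuming the Tate conjecture, simple motives over $\mathbb{F}$ (numerical equivalence) correspond to Galois orbits of elements of $\varinjlim_n W(p^n)$ (Weil numbers), and the centre of $\mathrm{End}(X(\bar\pi))$ is the fixed field of the stabilizer of $\bar\pi$. *)

theory Defs
  imports "HOL-Analysis.Analysis" "HOL-Computational_Algebra.Polynomial"
begin

definition Qal :: "complex set" where
  "Qal = {z. algebraic z}"

text \<open>Elements of Gal(Q^al/Q): field automorphisms of Q^al (only their values on Q^al matter).\<close>
definition gal_aut :: "(complex \<Rightarrow> complex) \<Rightarrow> bool" where
  "gal_aut \<sigma> \<longleftrightarrow> bij_betw \<sigma> Qal Qal \<and>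
     (\<forall>x\<in>Qal. \<forall>y\<in>Qal. \<sigma> (x + y) = \<sigma> x + \<sigma> y \<and> \<sigma> (x * y) = \<sigma> x * \<sigma> y)"

definition is_subfield :: "complex set \<Rightarrow> bool" where
  "is_subfield F \<longleftrightarrow> 0 \<in> F \<and> 1 \<in> F \<and>
     (\<forall>x\<in>F. \<forall>y\<in>F. x + y \<in> F \<and> x * y \<in> F) \<and>
     (\<forall>x\<in>F. - x \<in> F \<and> inverse x \<in> F)"

text \<open>The subfield of C generated by a number (for algebraic alpha this is Q[alpha]).\<close>
definition gen_field :: "complex \<Rightarrow> complex set" where
  "gen_field \<alpha> = \<Inter> {F. is_subfield F \<and> \<alpha> \<in> F}"

definition fixed_field :: "(complex \<Rightarrow> complex) set \<Rightarrow> complex set" where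
  "fixed_field H = {x \<in> Qal. \<forall>\<sigma>\<in>H. \<sigma> x = x}"

definition finite_over_Q :: "complex set \<Rightarrow> bool" where
  "finite_over_Q K \<longleftrightarrow> (\<exists>B. finite B \<and> B \<subseteq> K \<and>
      K \<subseteq> {\<Sum>b\<in>B. of_rat (c b) * b | c. True})"

definition totally_real :: "complex set \<Rightarrow> bool" where
  "totally_real F \<longleftrightarrow> (\<forall>\<sigma>. gal_aut \<sigma> \<longrightarrow> \<sigma> ` F \<subseteq> \<real>)"

definition totally_imaginary :: "complex set \<Rightarrow> bool" where
  "totally_imaginary K \<longleftrightarrow> (\<forall>\<sigma>. gal_aut \<sigma> \<longrightarrow> \<not> \<sigma> ` K \<subseteq> \<real>)"

definition CM_galois_field :: "complex set \<Rightarrow> bool" where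
  "CM_galois_field K \<longleftrightarrow> is_subfield K \<and> K \<subseteq> Qal \<and> finite_over_Q K \<and>
     (\<forall>\<sigma>. gal_aut \<sigma> \<longrightarrow> \<sigma> ` K = K) \<and>
     totally_imaginary K \<and>
     (\<exists>F a. is_subfield F \<and> F \<subseteq> K \<and> totally_real F \<and> a \<in> K \<and> a \<notin> F \<and>
            K = {x + y * a | x y. x \<in> F \<and> y \<in> F})"

definition roots_of_unity_in :: "complex set \<Rightarrow> complex set" where
  "roots_of_unity_in K = {z \<in> K. \<exists>k>0. z ^ k = 1}"

definition ints_of :: "complex set \<Rightarrow> complex set" where
  "ints_of K = {x \<in> K. algebraic_int x}"

definition is_ideal :: "complex set \<Rightarrow> complex set \<Rightarrow> bool" where
  "is_ideal K I \<longleftrightarrow> I \<subseteq> ints_of K \<and> 0 \<in> I \<and>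
     (\<forall>x\<in>I. \<forall>y\<in>I. x + y \<in> I) \<and> (\<forall>r\<in>ints_of K. \<forall>x\<in>I. r * x \<in> I)"

definition ideal_prod :: "complex set \<Rightarrow> complex set \<Rightarrow> complex set \<Rightarrow> complex set" where
  "ideal_prod K I J = \<Inter> {L. is_ideal K L \<and> {a * b | a b. a \<in> I \<and> b \<in> J} \<subseteq> L}"

fun ideal_pow :: "complex set \<Rightarrow> complex set \<Rightarrow> nat \<Rightarrow> complex set" where
  "ideal_pow K I 0 = ints_of K"
| "ideal_pow K I (Suc k) = ideal_prod K I (ideal_pow K I k)"

definition principal_ideal :: "complex set \<Rightarrow> complex \<Rightarrow> complex set" where
  "principal_ideal K a = {r * a | r. r \<in> ints_of K}"

definition padic_prime :: "complex set \<Rightarrow> nat \<Rightarrow> complex set \<Rightarrow> bool" where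
  "padic_prime K p w \<longleftrightarrow> is_ideal K w \<and> w \<noteq> ints_of K \<and> w \<noteq> {0} \<and>
     (\<forall>a\<in>ints_of K. \<forall>b\<in>ints_of K. a * b \<in> w \<longrightarrow> a \<in> w \<or> b \<in> w) \<and>
     of_nat p \<in> w"

definition ord_int :: "complex set \<Rightarrow> complex set \<Rightarrow> complex \<Rightarrow> nat" where
  "ord_int K w a = (GREATEST k. a \<in> ideal_pow K w k)"

definition ord :: "complex set \<Rightarrow> complex set \<Rightarrow> complex \<Rightarrow> int" where
  "ord K w x = (THE z. \<exists>a b. a \<in> ints_of K \<and> b \<in> ints_of K \<and> a \<noteq> 0 \<and> b \<noteq> 0 \<and>
                   x = a / b \<and> z = int (ord_int K w a) - int (ord_int K w b))"

definition residue_card :: "complex set \<Rightarrow> complex set \<Rightarrow> nat" where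
  "residue_card K w = card {{y \<in> ints_of K. x - y \<in> w} | x. x \<in> ints_of K}"

definition inertia_deg :: "complex set \<Rightarrow> nat \<Rightarrow> complex set \<Rightarrow> nat" where
  "inertia_deg K p w = (THE f. residue_card K w = p ^ f)"

definition ram_index :: "complex set \<Rightarrow> nat \<Rightarrow> complex set \<Rightarrow> int" where
  "ram_index K p w = ord K w (of_nat p)"

text \<open>Local degree [K_w : Q_p] = e_w f_w.\<close>
definition local_deg :: "complex set \<Rightarrow> nat \<Rightarrow> complex set \<Rightarrow> int" where
  "local_deg K p w = ram_index K p w * int (inertia_deg K p w)"

definition class_order :: "complex set \<Rightarrow> complex set \<Rightarrow> nat" where
  "class_order K w = (LEAST h. h > 0 \<and> (\<exists>a \<in> ints_of K. ideal_pow K w h = principal_ideal K a))"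

definition weil0 :: "nat \<Rightarrow> complex \<Rightarrow> bool" where
  "weil0 q \<pi> \<longleftrightarrow> algebraic \<pi> \<and> (\<forall>\<sigma>. gal_aut \<sigma> \<longrightarrow> cmod (\<sigma> \<pi>) = 1) \<and>
     (\<exists>N. algebraic_int (of_nat q ^ N * \<pi>))"

definition n_w :: "complex set \<Rightarrow> nat \<Rightarrow> complex set \<Rightarrow> nat \<Rightarrow> complex \<Rightarrow> rat" where
  "n_w K p w q \<pi> = of_int (ord K w \<pi>) / of_int (ord K w (of_nat q)) * of_int (local_deg K p w)"

definition W0K :: "complex set \<Rightarrow> nat \<Rightarrow> nat \<Rightarrow> complex set" where
  "W0K K p a = {\<pi> \<in> K. weil0 (p ^ a) \<pi> \<and>
      (\<forall>w. padic_prime K p w \<longrightarrow> n_w K p w (p ^ a) \<pi> \<in> \<int>)}"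

definition W0K_pn :: "complex set \<Rightarrow> nat \<Rightarrow> nat \<Rightarrow> complex set" where
  "W0K_pn K p n = {\<pi>. weil0 p \<pi> \<and> \<pi> ^ n \<in> W0K K p n}"

text \<open>Equality in the direct limit W_0^K(p^infinity) of the classes of
  x in W_0^K(p^a) and y in W_0^K(p^b) (transition maps x \<mapsto> x^(c/a)).\<close>
definition lim_eq :: "nat \<times> complex \<Rightarrow> nat \<times> complex \<Rightarrow> bool" where
  "lim_eq u v \<longleftrightarrow> (\<exists>c. c > 0 \<and> fst u dvd c \<and> fst v dvd c \<and>
      snd u ^ (c div fst u) = snd v ^ (c div fst v))"

text \<open>Stabilizer in Gal(Q^al/Q) of the image of pi in W_0^K(p^infinity), i.e. of the class of (n, pi^n).\<close>
definition stabilizer :: "nat \<Rightarrow> complex \<Rightarrow> (complex \<Rightarrow> complex) set" where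
  "stabilizer n \<pi> = {\<sigma>. gal_aut \<sigma> \<and> lim_eq (n, \<sigma> (\<pi> ^ n)) (n, \<pi> ^ n)}"

end

theory Submission
  imports Defs "HOL-Computational_Algebra.Computational_Algebra" "HOL-Computational_Algebra.Field_as_Ring"
    "HOL-Computational_Algebra.Fundamental_Theorem_Algebra"
begin

interpretation Q: vector_space "\<lambda>(r::rat) (z::complex). of_rat r * z"
  by unfold_locales (auto simp: algebra_simps of_rat_add of_rat_mult)

lemma Q_span_mult_const:
  assumes "u \<in> Q.span B" shows "c * u \<in> Q.span ((\<lambda>b. c * b) ` B)"
  using assms
proof (induction rule: Q.span_induct_alt)
  case base then show ?case by (simp add: Q.span_zero)
next
  case (step r x y)
  have "c * (of_rat r * x + y) = of_rat r * (c * x) + c * y" by (simp add: algebra_simps)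
  moreover have "c * x \<in> Q.span ((\<lambda>b. c * b) ` B)" using step by (intro Q.span_base) auto
  ultimately show ?case using step Q.span_add Q.span_scale by metis
qed

lemma Q_span_rat: "1 \<in> Q.span B \<Longrightarrow> of_rat r \<in> Q.span B"
  using Q.span_scale[of 1 B r] by simp

definition qring :: "complex set \<Rightarrow> bool" where
  "qring B \<longleftrightarrow> finite B \<and> 1 \<in> Q.span B \<and> (\<forall>a\<in>B. \<forall>b\<in>B. a * b \<in> Q.span B)"

lemma qring_mult_aux:
  assumes "\<forall>b\<in>B. a * b \<in> Q.span B" "v \<in> Q.span B"
  shows "a * v \<in> Q.span B"
  using assms(2)
proof (induction rule: Q.span_induct_alt)
  case base then show ?case by (simp add: Q.span_zero)
next
  case (step r x y)
  have "a * (of_rat r * x + y) = of_rat r * (a * x) + a * y" by (simp add: algebra_simps)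
  then show ?case using step assms(1) Q.span_add Q.span_scale by metis
qed

lemma qring_mult:
  assumes "qring B" "u \<in> Q.span B" "v \<in> Q.span B"
  shows "u * v \<in> Q.span B"
  using assms(2)
proof (induction rule: Q.span_induct_alt)
  case base then show ?case by (simp add: Q.span_zero)
next
  case (step r x y)
  have "(of_rat r * x + y) * v = of_rat r * (x * v) + y * v" by (simp add: algebra_simps)
  moreover have "x * v \<in> Q.span B"
    using qring_mult_aux[of B x v] assms step unfolding qring_def by auto
  ultimately show ?case using step Q.span_add Q.span_scale by metis
qed

lemma qring_power:
  assumes "qring B" "u \<in> Q.span B"
  shows "u ^ k \<in> Q.span B"
  using assms by (induction k) (auto simp: qring_def intro: qring_mult)

lemma fd_algebraic:
  assumes "finite B" "\<And>k. z ^ k \<in> Q.span B"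
  shows "algebraic z"
proof -
  define N where "N = card B"
  define S where "S = (\<lambda>k. z ^ k) ` {0..N}"
  show ?thesis
  proof (cases "inj_on (\<lambda>k. z ^ k) {0..N}")
    case False
    then obtain i j where ij: "i \<le> N" "j \<le> N" "i \<noteq> j" "z ^ i = z ^ j"
      unfolding inj_on_def by auto
    define P :: "complex poly" where "P = monom 1 i - monom 1 j"
    have "P \<noteq> 0" using ij by (simp add: P_def monom_eq_iff') 
    moreover have "poly P z = 0" using ij by (simp add: P_def poly_monom)
    moreover have "\<forall>n. coeff P n \<in> \<rat>" by (simp add: P_def coeff_monom)
    ultimately show ?thesis by (intro algebraicI') auto
  next
    case True
    have cS: "card S = N + 1" using True by (simp add: S_def card_image)
    have fS: "finite S" by (simp add: S_def)
    have "S \<subseteq> Q.span B" using assms(2) by (auto simp: S_def)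
    then have "Q.dependent S"
      using Q.independent_span_bound[OF assms(1), of S] cS by (auto simp: N_def)
    then obtain u where u: "\<exists>v\<in>S. u v \<noteq> 0" "(\<Sum>v\<in>S. of_rat (u v) * v) = 0"
      using Q.dependent_finite[OF fS] by auto
    define P :: "complex poly" where "P = (\<Sum>k\<in>{0..N}. monom (of_rat (u (z ^ k))) k)"
    have cP: "coeff P n = (if n \<le> N then of_rat (u (z ^ n)) else 0)" for n
      by (simp add: P_def coeff_sum coeff_monom)
    obtain k where k: "k \<le> N" "u (z ^ k) \<noteq> 0" using u(1) by (auto simp: S_def)
    have P0: "P \<noteq> 0"
    proof
      assume "P = 0" then have "coeff P k = 0" by simp
      with k cP show False by simp
    qed
    have "poly P z = (\<Sum>k\<in>{0..N}. of_rat (u (z ^ k)) * z ^ k)"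
      by (simp add: P_def poly_sum poly_monom)
    also have "\<dots> = (\<Sum>v\<in>S. of_rat (u v) * v)"
      unfolding S_def by (subst sum.reindex[OF True]) (simp add: o_def)
    also have "\<dots> = 0" by (rule u(2))
    finally have "poly P z = 0" .
    moreover have "\<forall>n. coeff P n \<in> \<rat>" by (simp add: cP)
    ultimately show ?thesis using P0 by (intro algebraicI') auto
  qed
qed

lemma qring_algebraic:
  assumes "qring B" "z \<in> Q.span B" shows "algebraic z"
  using fd_algebraic[of B z] qring_power[OF assms] assms(1) by (auto simp: qring_def)

lemma qring_adjoin:
  assumes B: "qring B" and p: "lead_coeff p = 1" "\<forall>i. coeff p i \<in> Q.span B" "poly p w = 0"
  shows "\<exists>B'. qring B' \<and> Q.span B \<subseteq> Q.span B' \<and> w \<in> Q.span B'"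
proof -
  define d where "d = degree p"
  have "d \<noteq> 0"
  proof
    assume "d = 0"
    then have "p = [:1:]" using p(1) unfolding d_def by (metis degree_0_id)
    then show False using p(3) by simp
  qed
  define B' where "B' = (\<lambda>(b,i). b * w ^ i) ` (B \<times> {..<d})"
  have fB: "finite B" using B by (simp add: qring_def)
  have wd: "w ^ d = - (\<Sum>i<d. coeff p i * w ^ i)"
  proof -
    have "0 = (\<Sum>i\<le>d. coeff p i * w ^ i)" using p(3) by (simp add: poly_altdef d_def)
    also have "\<dots> = (\<Sum>i<d. coeff p i * w ^ i) + w ^ d"
      using p(1) by (simp add: lessThan_Suc_atMost[symmetric] d_def)
    finally show ?thesis by (simp add: add_eq_0_iff2 algebra_simps)
  qed
  have C: "\<forall>c\<in>Q.span B. c * w ^ k \<in> Q.span B'" for k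
  proof (induction k rule: less_induct)
    case (less k)
    show ?case
    proof
      fix c assume c: "c \<in> Q.span B"
      show "c * w ^ k \<in> Q.span B'"
      proof (cases "k < d")
        case True
        have "w ^ k * c \<in> Q.span ((\<lambda>b. w ^ k * b) ` B)" by (rule Q_span_mult_const[OF c])
        moreover have "(\<lambda>b. w ^ k * b) ` B \<subseteq> B'" using True by (auto simp: B'_def mult.commute)
        ultimately have "w ^ k * c \<in> Q.span B'" using Q.span_mono by blast
        then show ?thesis by (simp only: mult.commute)
      next
        case False
        have "c * w ^ k = c * w ^ (k - d) * w ^ d" using False by (simp add: power_add[symmetric])
        also have "\<dots> = - (\<Sum>i<d. (c * coeff p i) * w ^ (k - d + i))"
          by (simp add: wd sum_distrib_left power_add algebra_simps)
        finally have eq: "c * w ^ k = - (\<Sum>i<d. (c * coeff p i) * w ^ (k - d + i))" .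
        have "(\<Sum>i<d. (c * coeff p i) * w ^ (k - d + i)) \<in> Q.span B'"
        proof (rule Q.span_sum)
          fix i assume i: "i \<in> {..<d}"
          have "c * coeff p i \<in> Q.span B" using qring_mult[OF B c] p(2) by auto
          moreover have "k - d + i < k" using i False \<open>d \<noteq> 0\<close> by auto
          ultimately show "(c * coeff p i) * w ^ (k - d + i) \<in> Q.span B'" using less by auto
        qed
        then show ?thesis unfolding eq by (rule Q.span_neg)
      qed
    qed
  qed
  have sub: "Q.span B \<subseteq> Q.span B'" using C[of 0] by auto
  have "1 \<in> Q.span B" using B by (simp add: qring_def)
  then have w: "w \<in> Q.span B'" using C[of 1] by force
  have "qring B'"
    unfolding qring_def
  proof (intro conjI ballI)
    show "finite B'" using fB by (simp add: B'_def)
    show "1 \<in> Q.span B'" using sub B by (auto simp: qring_def)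
    fix a b assume "a \<in> B'" "b \<in> B'"
    then obtain a0 i b0 j where "a0 \<in> B" "b0 \<in> B" "a = a0 * w ^ i" "b = b0 * w ^ j"
      by (auto simp: B'_def)
    moreover have "a0 * b0 \<in> Q.span B" using B \<open>a0 \<in> B\<close> \<open>b0 \<in> B\<close> by (auto simp: qring_def)
    ultimately show "a * b \<in> Q.span B'" using C[of "i + j"] by (auto simp: power_add algebra_simps)
  qed
  then show ?thesis using sub w by blast
qed

lemma algebraic_monic:
  assumes "algebraic x"
  obtains p where "lead_coeff p = 1" "\<forall>i. coeff p i \<in> \<rat>" "poly p (x::complex) = 0"
proof -
  obtain p where p: "\<And>i. coeff p i \<in> \<rat>" "p \<noteq> 0" "poly p x = 0"
    using assms unfolding algebraic_altdef by metis
  define q where "q = smult (inverse (lead_coeff p)) p"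
  have "lead_coeff q = 1" using p(2) by (simp add: q_def)
  moreover have "\<forall>i. coeff q i \<in> \<rat>" using p(1) by (simp add: q_def)
  moreover have "poly q x = 0" using p(3) by (simp add: q_def)
  ultimately show ?thesis using that by blast
qed

lemma qring_one: "qring {1}"
  by (simp add: qring_def Q.span_base)

lemma qring_exists:
  assumes "finite A" "\<forall>a\<in>A. algebraic a"
  shows "\<exists>B. qring B \<and> A \<subseteq> Q.span B"
  using assms
proof (induction A rule: finite_induct)
  case empty then show ?case using qring_one by blast
next
  case (insert a A)
  then obtain B where B: "qring B" "A \<subseteq> Q.span B" by auto
  obtain p where p: "lead_coeff p = 1" "\<forall>i. coeff p i \<in> \<rat>" "poly p a = 0"
    using algebraic_monic insert by auto
  have "\<forall>i. coeff p i \<in> Q.span B"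
  proof
    fix i from p(2) obtain r where "coeff p i = of_rat r" by (metis Rats_cases)
    then show "coeff p i \<in> Q.span B" using Q_span_rat B(1) by (simp add: qring_def)
  qed
  from qring_adjoin[OF B(1) p(1) this p(3)] obtain B' where
    "qring B'" "Q.span B \<subseteq> Q.span B'" "a \<in> Q.span B'" by blast
  then show ?case using B(2) Q.span_superset by blast
qed

lemma algebraic_add: "algebraic (x::complex) \<Longrightarrow> algebraic y \<Longrightarrow> algebraic (x + y)"
  using qring_exists[of "{x,y}"] by (auto intro: qring_algebraic Q.span_add)

lemma algebraic_mult: "algebraic (x::complex) \<Longrightarrow> algebraic y \<Longrightarrow> algebraic (x * y)"
  using qring_exists[of "{x,y}"] by (auto intro: qring_algebraic qring_mult)

lemma algebraic_power: "algebraic (x::complex) \<Longrightarrow> algebraic (x ^ n)"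
  by (induction n) (auto intro: algebraic_mult)

lemma algebraic_root_monic:
  assumes "lead_coeff p = 1" "\<forall>i. algebraic (coeff p i)" "poly p (w::complex) = 0"
  shows "algebraic w"
proof -
  obtain B where B: "qring B" "coeff p ` {..degree p} \<subseteq> Q.span B"
    using qring_exists[of "coeff p ` {..degree p}"] assms(2) by auto
  have "\<forall>i. coeff p i \<in> Q.span B"
  proof
    fix i show "coeff p i \<in> Q.span B"
      using B(2) by (cases "i \<le> degree p") (auto simp: coeff_eq_0 Q.span_zero)
  qed
  from qring_adjoin[OF B(1) assms(1) this assms(3)] show ?thesis
    by (auto intro: qring_algebraic)
qed

lemma algebraic_root:
  assumes "p \<noteq> 0" "\<forall>i. algebraic (coeff p i)" "poly p (w::complex) = 0"
  shows "algebraic w"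
proof -
  define q where "q = smult (inverse (lead_coeff p)) p"
  have "lead_coeff q = 1" using assms(1) by (simp add: q_def)
  moreover have "\<forall>i. algebraic (coeff q i)" using assms(1,2)
    by (auto simp: q_def intro!: algebraic_mult algebraic_inverse)
  moreover have "poly q w = 0" using assms(3) by (simp add: q_def)
  ultimately show ?thesis by (rule algebraic_root_monic)
qed


lemma Qal_subfield: "is_subfield Qal"
  unfolding is_subfield_def Qal_def by (auto intro: algebraic_add algebraic_mult)

lemma Qal_power: "x \<in> Qal \<Longrightarrow> x ^ n \<in> Qal"
  by (simp add: Qal_def algebraic_power)

context fixes L assumes sf: "is_subfield L" begin
lemma sf_0: "0 \<in> L" and sf_1: "1 \<in> L" using sf by (auto simp: is_subfield_def)
lemma sf_add: "a \<in> L \<Longrightarrow> b \<in> L \<Longrightarrow> a + b \<in> L" using sf by (auto simp: is_subfield_def)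
lemma sf_mult: "a \<in> L \<Longrightarrow> b \<in> L \<Longrightarrow> a * b \<in> L" using sf by (auto simp: is_subfield_def)
lemma sf_uminus: "a \<in> L \<Longrightarrow> - a \<in> L" using sf by (auto simp: is_subfield_def)
lemma sf_inverse: "a \<in> L \<Longrightarrow> inverse a \<in> L" using sf by (auto simp: is_subfield_def)
lemma sf_diff: "a \<in> L \<Longrightarrow> b \<in> L \<Longrightarrow> a - b \<in> L"
  using sf_add sf_uminus by (metis diff_conv_add_uminus)
lemma sf_divide: "a \<in> L \<Longrightarrow> b \<in> L \<Longrightarrow> a / b \<in> L"
  using sf_mult sf_inverse by (metis divide_inverse)
lemma sf_sum: "(\<And>i. i \<in> I \<Longrightarrow> f i \<in> L) \<Longrightarrow> sum f I \<in> L"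
  by (induction I rule: infinite_finite_induct) (auto intro: sf_0 sf_add)
lemma sf_power: "a \<in> L \<Longrightarrow> a ^ n \<in> L"
  by (induction n) (auto intro: sf_1 sf_mult)
lemma sf_of_nat: "of_nat n \<in> L"
  by (induction n) (auto intro: sf_0 sf_1 sf_add)
lemma sf_of_int: "of_int k \<in> L"
proof (cases "0 \<le> k")
  case True then have "(of_int k::complex) = of_nat (nat k)" by simp
  then show ?thesis using sf_of_nat by simp
next
  case False then have "(of_int k::complex) = - of_nat (nat (- k))" by simp
  then show ?thesis using sf_of_nat sf_uminus by simp
qed
lemma sf_Ints: "a \<in> \<int> \<Longrightarrow> a \<in> L"
  by (auto elim: Ints_cases intro: sf_of_int)
end

definition Lpoly :: "complex set \<Rightarrow> complex poly \<Rightarrow> bool" where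
  "Lpoly L f \<longleftrightarrow> (\<forall>i. coeff f i \<in> L)"

context fixes L assumes sf: "is_subfield L" begin

lemma Lpoly_0: "Lpoly L 0" using sf_0[OF sf] by (simp add: Lpoly_def)
lemma Lpoly_pCons: "Lpoly L (pCons a f) \<longleftrightarrow> a \<in> L \<and> Lpoly L f"
proof
  assume "Lpoly L (pCons a f)"
  then have "coeff (pCons a f) 0 \<in> L" "\<And>i. coeff (pCons a f) (Suc i) \<in> L" unfolding Lpoly_def by blast+
  then show "a \<in> L \<and> Lpoly L f" by (simp add: Lpoly_def)
next
  assume "a \<in> L \<and> Lpoly L f"
  then show "Lpoly L (pCons a f)" by (auto simp: Lpoly_def coeff_pCons split: nat.splits)
qed
lemma Lpoly_const: "a \<in> L \<Longrightarrow> Lpoly L [:a:]" using Lpoly_pCons Lpoly_0 by simp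
lemma Lpoly_1: "Lpoly L 1" using Lpoly_const sf_1[OF sf] by (simp add: one_pCons)
lemma Lpoly_X: "Lpoly L [:0,1:]" using Lpoly_pCons Lpoly_const sf_0[OF sf] sf_1[OF sf] by simp
lemma Lpoly_add: "Lpoly L f \<Longrightarrow> Lpoly L g \<Longrightarrow> Lpoly L (f + g)"
  by (simp add: Lpoly_def sf_add[OF sf])
lemma Lpoly_uminus: "Lpoly L f \<Longrightarrow> Lpoly L (- f)"
  by (simp add: Lpoly_def sf_uminus[OF sf])
lemma Lpoly_diff: "Lpoly L f \<Longrightarrow> Lpoly L g \<Longrightarrow> Lpoly L (f - g)"
  by (simp add: Lpoly_def sf_diff[OF sf])
lemma Lpoly_smult: "a \<in> L \<Longrightarrow> Lpoly L f \<Longrightarrow> Lpoly L (smult a f)"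
  by (simp add: Lpoly_def sf_mult[OF sf])
lemma Lpoly_mult: "Lpoly L f \<Longrightarrow> Lpoly L g \<Longrightarrow> Lpoly L (f * g)"
  unfolding Lpoly_def coeff_mult by (auto intro!: sf_sum[OF sf] sf_mult[OF sf])
lemma Lpoly_power: "Lpoly L f \<Longrightarrow> Lpoly L (f ^ n)"
  by (induction n) (auto intro: Lpoly_1 Lpoly_mult)
lemma Lpoly_poly: "Lpoly L f \<Longrightarrow> x \<in> L \<Longrightarrow> poly f x \<in> L"
  by (induction f) (auto simp: Lpoly_pCons intro: sf_add[OF sf] sf_mult[OF sf] sf_0[OF sf])
lemma Lpoly_pcompose: "Lpoly L f \<Longrightarrow> Lpoly L g \<Longrightarrow> Lpoly L (pcompose f g)"
  by (induction f) (auto simp: Lpoly_pCons pcompose_pCons intro: Lpoly_add Lpoly_mult Lpoly_const Lpoly_0)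
lemma lead_coeff_L: "Lpoly L f \<Longrightarrow> lead_coeff f \<in> L" by (simp add: Lpoly_def)

lemma Lpoly_divmod: "Lpoly L f \<Longrightarrow> Lpoly L g \<Longrightarrow> Lpoly L (f div g) \<and> Lpoly L (f mod g)"
proof (induction f)
  case 0 then show ?case by (simp add: Lpoly_0)
next
  case (pCons a f)
  then have a: "a \<in> L" and f: "Lpoly L f" by (auto simp: Lpoly_pCons)
  with pCons have IH: "Lpoly L (f div g)" "Lpoly L (f mod g)" by auto
  define b where "b = coeff (pCons a (f mod g)) (degree g) / lead_coeff g"
  have "Lpoly L (pCons a (f mod g))" using a IH by (simp add: Lpoly_pCons)
  then have b: "b \<in> L" unfolding b_def using pCons.prems(2)
    by (intro sf_divide[OF sf]) (auto simp: Lpoly_def)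
  show ?case
  proof (cases "g = 0")
    case True then show ?thesis using pCons.prems by simp
  next
    case False
    have "pCons a f div g = pCons b (f div g)"
      using False by (simp add: div_pCons_eq b_def)
    moreover have "pCons a f mod g = pCons a (f mod g) - smult b g"
      using False by (simp add: mod_pCons_eq b_def)
    ultimately show ?thesis using IH a b pCons.prems(2)
      by (simp add: Lpoly_pCons Lpoly_diff Lpoly_smult)
  qed
qed

lemma Lpoly_div: "Lpoly L f \<Longrightarrow> Lpoly L g \<Longrightarrow> Lpoly L (f div g)"
  and Lpoly_mod: "Lpoly L f \<Longrightarrow> Lpoly L g \<Longrightarrow> Lpoly L (f mod g)"
  using Lpoly_divmod by auto

end

definition alg_over :: "complex set \<Rightarrow> complex \<Rightarrow> bool" where
  "alg_over L x \<longleftrightarrow> (\<exists>q. Lpoly L q \<and> q \<noteq> 0 \<and> poly q x = 0)"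

definition is_minp :: "complex set \<Rightarrow> complex \<Rightarrow> complex poly \<Rightarrow> bool" where
  "is_minp L x p \<longleftrightarrow> Lpoly L p \<and> lead_coeff p = 1 \<and> poly p x = 0 \<and>
     (\<forall>q. Lpoly L q \<and> q \<noteq> 0 \<and> poly q x = 0 \<longrightarrow> degree p \<le> degree q)"

definition minp :: "complex set \<Rightarrow> complex \<Rightarrow> complex poly" where
  "minp L x = (SOME p. is_minp L x p)"

lemma alg_over_Qal: "is_subfield L \<Longrightarrow> x \<in> Qal \<Longrightarrow> alg_over L x"
  unfolding alg_over_def Qal_def algebraic_def Lpoly_def by (auto intro: sf_Ints)

lemma minp_exists:
  assumes sf: "is_subfield L" and "alg_over L x"
  shows "is_minp L x (minp L x)"
proof -
  define n where "n = (LEAST n. \<exists>q. Lpoly L q \<and> q \<noteq> 0 \<and> poly q x = 0 \<and> degree q = n)"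
  have "\<exists>q. Lpoly L q \<and> q \<noteq> 0 \<and> poly q x = 0 \<and> degree q = n"
    unfolding n_def by (rule LeastI_ex) (use assms in \<open>auto simp: alg_over_def\<close>)
  then obtain q where q: "Lpoly L q" "q \<noteq> 0" "poly q x = 0" "degree q = n" by blast
  have min: "degree q \<le> degree r" if "Lpoly L r" "r \<noteq> 0" "poly r x = 0" for r
    using q(4) that unfolding n_def by (auto intro: Least_le)
  define p where "p = smult (inverse (lead_coeff q)) q"
  have "Lpoly L p" unfolding p_def
    by (intro Lpoly_smult[OF sf] sf_inverse[OF sf] lead_coeff_L[OF sf] q(1))
  moreover have "lead_coeff p = 1" using q(2) by (simp add: p_def)
  moreover have "poly p x = 0" using q(3) by (simp add: p_def)
  moreover have "degree p = degree q" using q(2) by (simp add: p_def)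
  ultimately have "is_minp L x p" unfolding is_minp_def using min by auto
  then show ?thesis unfolding minp_def by (rule someI)
qed

context fixes L x assumes sf: "is_subfield L" and alg: "alg_over L x" begin

lemma minp_L: "Lpoly L (minp L x)" and minp_monic: "lead_coeff (minp L x) = 1"
  and minp_root: "poly (minp L x) x = 0"
  and minp_min: "Lpoly L q \<Longrightarrow> q \<noteq> 0 \<Longrightarrow> poly q x = 0 \<Longrightarrow> degree (minp L x) \<le> degree q"
  using minp_exists[OF sf alg] by (auto simp: is_minp_def)

lemma minp_nz: "minp L x \<noteq> 0" using minp_monic by auto

lemma minp_degree: "degree (minp L x) \<noteq> 0"
proof
  assume "degree (minp L x) = 0"
  then have "minp L x = [:1:]" using minp_monic by (metis degree_0_id)
  then show False using minp_root by simp
qed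

lemma minp_dvd:
  assumes "Lpoly L q" "poly q x = 0"
  shows "\<exists>h. Lpoly L h \<and> q = minp L x * h"
proof -
  define M where "M = minp L x"
  have M: "Lpoly L M" "M \<noteq> 0" using minp_L minp_nz by (auto simp: M_def)
  have r: "Lpoly L (q mod M)" using Lpoly_mod[OF sf assms(1) M(1)] .
  have "q = q div M * M + q mod M" by simp
  then have "poly q x = poly (q div M * M + q mod M) x" by simp
  then have "poly q x = poly (q div M) x * poly M x + poly (q mod M) x"
    by (simp only: poly_add poly_mult)
  then have px: "poly (q mod M) x = 0" using assms(2) minp_root by (simp add: M_def)
  have "q mod M = 0"
  proof (rule ccontr)
    assume nz: "q mod M \<noteq> 0"
    then have "degree (q mod M) < degree M" using degree_mod_less'[OF M(2)] by blast
    moreover have "degree M \<le> degree (q mod M)" using minp_min[OF r nz px] by (simp add: M_def)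
    ultimately show False by simp
  qed
  have "q = q div M * M + q mod M" by (rule div_mult_mod_eq[symmetric])
  with \<open>q mod M = 0\<close> have "q = M * (q div M)" by (simp add: mult.commute)
  then show ?thesis using Lpoly_div[OF sf assms(1) M(1)] by (auto simp: M_def)
qed

end


definition fhom :: "complex set \<Rightarrow> (complex \<Rightarrow> complex) \<Rightarrow> bool" where
  "fhom L \<tau> \<longleftrightarrow> \<tau> 1 = 1 \<and> (\<forall>a\<in>L. \<forall>b\<in>L. \<tau> (a + b) = \<tau> a + \<tau> b \<and> \<tau> (a * b) = \<tau> a * \<tau> b)"

context fixes L \<tau> assumes sf: "is_subfield L" and h: "fhom L \<tau>" begin

lemma fh_1: "\<tau> 1 = 1" using h by (simp add: fhom_def)
lemma fh_add: "a \<in> L \<Longrightarrow> b \<in> L \<Longrightarrow> \<tau> (a + b) = \<tau> a + \<tau> b" using h by (simp add: fhom_def)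
lemma fh_mult: "a \<in> L \<Longrightarrow> b \<in> L \<Longrightarrow> \<tau> (a * b) = \<tau> a * \<tau> b" using h by (simp add: fhom_def)
lemma fh_0: "\<tau> 0 = 0"
  using fh_add[OF sf_0[OF sf] sf_0[OF sf]] by simp
lemma fh_uminus: "a \<in> L \<Longrightarrow> \<tau> (- a) = - \<tau> a"
proof -
  assume a: "a \<in> L"
  have "\<tau> a + \<tau> (- a) = 0" using fh_add[of a "-a"] sf_uminus[OF sf a] a fh_0 by simp
  then show ?thesis by (simp add: add_eq_0_iff)
qed
lemma fh_diff: "a \<in> L \<Longrightarrow> b \<in> L \<Longrightarrow> \<tau> (a - b) = \<tau> a - \<tau> b"
  using fh_add[of a "-b"] fh_uminus[of b] sf_uminus[OF sf, of b] by simp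
lemma fh_inverse: "a \<in> L \<Longrightarrow> \<tau> (inverse a) = inverse (\<tau> a)"
proof (cases "a = 0")
  case True then show ?thesis using fh_0 by simp
next
  case False
  assume a: "a \<in> L"
  have "\<tau> a * \<tau> (inverse a) = 1" using fh_mult[OF a sf_inverse[OF sf a]] False fh_1 by simp
  then show ?thesis by (simp add: field_simps inverse_eq_divide) (metis mult.commute nonzero_eq_divide_eq zero_neq_one mult_zero_left)
qed
lemma fh_nz: "a \<in> L \<Longrightarrow> a \<noteq> 0 \<Longrightarrow> \<tau> a \<noteq> 0"
proof
  assume a: "a \<in> L" "a \<noteq> 0" "\<tau> a = 0"
  have "\<tau> (a * inverse a) = 0" using fh_mult[OF a(1) sf_inverse[OF sf a(1)]] a(3) by simp
  then show False using a(2) fh_1 by simp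
qed
lemma fh_inj: "a \<in> L \<Longrightarrow> b \<in> L \<Longrightarrow> \<tau> a = \<tau> b \<Longrightarrow> a = b"
  using fh_nz[of "a - b"] fh_diff[of a b] sf_diff[OF sf, of a b] by auto
lemma fh_of_nat: "\<tau> (of_nat n) = of_nat n"
  by (induction n) (auto simp: fh_0 fh_1 fh_add sf_of_nat[OF sf] sf_1[OF sf])
lemma fh_of_int: "\<tau> (of_int k) = of_int k"
proof (cases "0 \<le> k")
  case True then have "(of_int k::complex) = of_nat (nat k)" by simp
  then show ?thesis using fh_of_nat by simp
next
  case False then have "(of_int k::complex) = - of_nat (nat (- k))" by simp
  then show ?thesis using fh_of_nat fh_uminus sf_of_nat[OF sf] by simp
qed
lemma fh_Ints: "a \<in> \<int> \<Longrightarrow> \<tau> a = a"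
  by (auto elim: Ints_cases simp: fh_of_int)

lemma mp_coeff: "coeff (map_poly \<tau> f) i = \<tau> (coeff f i)"
  by (simp add: coeff_map_poly fh_0)
lemma mp_add: "Lpoly L f \<Longrightarrow> Lpoly L g \<Longrightarrow> map_poly \<tau> (f + g) = map_poly \<tau> f + map_poly \<tau> g"
  by (intro poly_eqI) (simp add: mp_coeff fh_add Lpoly_def)
lemma mp_diff: "Lpoly L f \<Longrightarrow> Lpoly L g \<Longrightarrow> map_poly \<tau> (f - g) = map_poly \<tau> f - map_poly \<tau> g"
  by (intro poly_eqI) (simp add: mp_coeff fh_diff Lpoly_def)
lemma mp_smult: "a \<in> L \<Longrightarrow> Lpoly L f \<Longrightarrow> map_poly \<tau> (smult a f) = smult (\<tau> a) (map_poly \<tau> f)"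
  by (intro poly_eqI) (simp add: mp_coeff fh_mult Lpoly_def)
lemma mp_pCons: "map_poly \<tau> (pCons a f) = pCons (\<tau> a) (map_poly \<tau> f)"
  by (rule map_poly_pCons) (rule fh_0)
lemma mp_const: "map_poly \<tau> [:a:] = [:\<tau> a:]"
  by (simp add: mp_pCons fh_0)
lemma mp_mult: "Lpoly L f \<Longrightarrow> Lpoly L g \<Longrightarrow> map_poly \<tau> (f * g) = map_poly \<tau> f * map_poly \<tau> g"
proof (induction f)
  case 0 then show ?case by simp
next
  case (pCons a f)
  then have a: "a \<in> L" and f: "Lpoly L f" by (auto simp: Lpoly_pCons[OF sf])
  have "map_poly \<tau> (pCons a f * g) = map_poly \<tau> (smult a g + pCons 0 (f * g))" by simp
  also have "\<dots> = smult (\<tau> a) (map_poly \<tau> g) + pCons 0 (map_poly \<tau> f * map_poly \<tau> g)"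
    using pCons a f sf_0[OF sf]
    by (simp add: mp_add Lpoly_smult[OF sf] Lpoly_pCons[OF sf] Lpoly_mult[OF sf] mp_smult mp_pCons fh_0)
  also have "\<dots> = map_poly \<tau> (pCons a f) * map_poly \<tau> g" by (simp add: mp_pCons)
  finally show ?case .
qed
lemma mp_poly: "Lpoly L f \<Longrightarrow> x \<in> L \<Longrightarrow> poly (map_poly \<tau> f) (\<tau> x) = \<tau> (poly f x)"
proof (induction f)
  case 0 then show ?case by (simp add: fh_0)
next
  case (pCons a f)
  then have a: "a \<in> L" and f: "Lpoly L f" by (auto simp: Lpoly_pCons[OF sf])
  then show ?case using pCons
    by (simp add: mp_pCons fh_add fh_mult sf_mult[OF sf] Lpoly_poly[OF sf])
qed
lemma mp_monic: assumes "lead_coeff f = 1" shows "lead_coeff (map_poly \<tau> f) = 1" "degree (map_poly \<tau> f) = degree f"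
proof -
  have c: "coeff (map_poly \<tau> f) (degree f) = 1" using assms by (simp add: mp_coeff fh_1)
  have "degree (map_poly \<tau> f) \<le> degree f"
    by (rule degree_le) (simp add: mp_coeff coeff_eq_0 fh_0)
  moreover have "degree f \<le> degree (map_poly \<tau> f)" using c by (intro le_degree) simp
  ultimately show d: "degree (map_poly \<tau> f) = degree f" by simp
  show "lead_coeff (map_poly \<tau> f) = 1" using c d by simp
qed

end

lemma fhom_id: "fhom L (\<lambda>z. z)" by (simp add: fhom_def)


definition adj :: "complex set \<Rightarrow> complex \<Rightarrow> complex set" where
  "adj L x = {poly f x | f. Lpoly L f}"

lemma Lpoly_mono: "Lpoly L f \<Longrightarrow> L \<subseteq> L' \<Longrightarrow> Lpoly L' f"
  by (auto simp: Lpoly_def)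

context fixes L x assumes sf: "is_subfield L" and LQ: "L \<subseteq> Qal" and xQ: "x \<in> Qal" begin

lemma adj_L: "L \<subseteq> adj L x"
proof
  fix a assume "a \<in> L" then have "Lpoly L [:a:]" by (rule Lpoly_const[OF sf])
  then show "a \<in> adj L x" unfolding adj_def by (intro CollectI exI[of _ "[:a:]"]) auto
qed

lemma adj_x: "x \<in> adj L x"
  unfolding adj_def using Lpoly_X[OF sf] by (intro CollectI exI[of _ "[:0,1:]"]) auto

lemma adj_Qal: "adj L x \<subseteq> Qal"
  unfolding adj_def using Lpoly_poly[OF Qal_subfield] Lpoly_mono LQ xQ by blast

lemma adj_subfield: "is_subfield (adj L x)"
  unfolding is_subfield_def
proof (intro conjI ballI)
  show "0 \<in> adj L x" "1 \<in> adj L x" using adj_L sf_0[OF sf] sf_1[OF sf] by auto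
next
  fix a b assume "a \<in> adj L x" "b \<in> adj L x"
  then obtain f g where f: "Lpoly L f" "a = poly f x" and g: "Lpoly L g" "b = poly g x"
    by (auto simp: adj_def)
  show "a + b \<in> adj L x" unfolding adj_def using f g Lpoly_add[OF sf f(1) g(1)]
    by (intro CollectI exI[of _ "f + g"]) auto
  show "a * b \<in> adj L x" unfolding adj_def using f g Lpoly_mult[OF sf f(1) g(1)]
    by (intro CollectI exI[of _ "f * g"]) auto
next
  fix a assume "a \<in> adj L x"
  then obtain f where f: "Lpoly L f" "a = poly f x" by (auto simp: adj_def)
  show "- a \<in> adj L x" unfolding adj_def using f Lpoly_uminus[OF sf f(1)]
    by (intro CollectI exI[of _ "- f"]) auto
  show "inverse a \<in> adj L x"
  proof (cases "a = 0")
    case True then show ?thesis using adj_L sf_0[OF sf] by auto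
  next
    case False
    have aQ: "a \<in> Qal" using \<open>a \<in> adj L x\<close> adj_Qal by blast
    have alg: "alg_over L a" by (rule alg_over_Qal[OF sf aQ])
    define M where "M = minp L a"
    obtain c N where cM: "M = pCons c N" by (cases M) auto
    have Mp: "Lpoly L M" "lead_coeff M = 1" "poly M a = 0" "M \<noteq> 0"
      using minp_L[OF sf alg] minp_monic[OF sf alg] minp_root[OF sf alg] minp_nz[OF sf alg]
      by (auto simp: M_def)
    have c: "c \<in> L" and NL: "Lpoly L N" using Mp(1) cM by (auto simp: Lpoly_pCons[OF sf])
    have eq: "c + a * poly N a = 0" using Mp(3) cM by simp
    have "c \<noteq> 0"
    proof
      assume c0: "c = 0"
      then have "poly N a = 0" using eq False by simp
      moreover have "N \<noteq> 0" using Mp(4) cM c0 by auto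
      ultimately have "degree M \<le> degree N" using minp_min[OF sf alg NL] by (auto simp: M_def)
      moreover have "degree M = Suc (degree N)" using cM \<open>N \<noteq> 0\<close> by (simp add: degree_pCons_eq)
      ultimately show False by simp
    qed
    have aP: "a * poly N a = - c" using eq by (simp add: add_eq_0_iff)
    have "a * (- poly N a / c) = 1" using aP \<open>c \<noteq> 0\<close> by (simp add: minus_divide_right[symmetric] mult.assoc[symmetric] del: minus_divide_right)
    then have inv: "inverse a = - poly N a / c" by (rule inverse_unique)
    have "Lpoly L (smult (- inverse c) (pcompose N f))"
      by (intro Lpoly_smult[OF sf] Lpoly_pcompose[OF sf] NL f(1) sf_uminus[OF sf] sf_inverse[OF sf] c)
    moreover have "poly (smult (- inverse c) (pcompose N f)) x = inverse a"
      by (simp add: poly_pcompose f(2)[symmetric] inv divide_inverse)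
    ultimately show ?thesis unfolding adj_def by force
  qed
qed

end

lemma extend_hom:
  assumes sf: "is_subfield L" and LQ: "L \<subseteq> Qal" and h: "fhom L \<tau>" and tQ: "\<tau> ` L \<subseteq> Qal"
    and xQ: "x \<in> Qal" and y: "poly (map_poly \<tau> (minp L x)) y = 0"
  shows "\<exists>\<tau>'. fhom (adj L x) \<tau>' \<and> (\<forall>a\<in>L. \<tau>' a = \<tau> a) \<and> \<tau>' x = y \<and> \<tau>' ` adj L x \<subseteq> Qal"
proof -
  have alg: "alg_over L x" by (rule alg_over_Qal[OF sf xQ])
  define M where "M = minp L x"
  have Mp: "Lpoly L M" "lead_coeff M = 1" "poly M x = 0"
    using minp_L[OF sf alg] minp_monic[OF sf alg] minp_root[OF sf alg] by (auto simp: M_def)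
  have wd: "poly (map_poly \<tau> f) y = poly (map_poly \<tau> g) y"
    if f: "Lpoly L f" and g: "Lpoly L g" and e: "poly f x = poly g x" for f g
  proof -
    have fg: "Lpoly L (f - g)" "poly (f - g) x = 0" using Lpoly_diff[OF sf f g] e by auto
    obtain q where q: "Lpoly L q" "f - g = M * q" using minp_dvd[OF sf alg fg] by (auto simp: M_def)
    have "map_poly \<tau> f - map_poly \<tau> g = map_poly \<tau> M * map_poly \<tau> q"
      using mp_diff[OF sf h f g] mp_mult[OF sf h Mp(1) q(1)] q(2) by simp
    then have "poly (map_poly \<tau> f - map_poly \<tau> g) y = poly (map_poly \<tau> M * map_poly \<tau> q) y" by simp
    then have "poly (map_poly \<tau> f) y - poly (map_poly \<tau> g) y = 0"
      using y by (simp only: poly_diff poly_mult M_def) simp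
    then show ?thesis by simp
  qed
  define \<tau>' where "\<tau>' z = (SOME w. \<exists>f. Lpoly L f \<and> z = poly f x \<and> w = poly (map_poly \<tau> f) y)" for z
  have key: "\<tau>' (poly f x) = poly (map_poly \<tau> f) y" if f: "Lpoly L f" for f
  proof -
    have "\<exists>w. \<exists>g. Lpoly L g \<and> poly f x = poly g x \<and> w = poly (map_poly \<tau> g) y" using f by blast
    from someI_ex[OF this] obtain g where g: "Lpoly L g" "poly f x = poly g x"
      "\<tau>' (poly f x) = poly (map_poly \<tau> g) y" unfolding \<tau>'_def by blast
    then show ?thesis using wd[OF f g(1) g(2)] by simp
  qed
  have "fhom (adj L x) \<tau>'"
    unfolding fhom_def
  proof (intro conjI ballI)
    have "\<tau>' (poly [:1:] x) = poly (map_poly \<tau> [:1:]) y" by (rule key[OF Lpoly_1[OF sf, unfolded one_pCons]])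
    then show "\<tau>' 1 = 1" by (simp add: mp_const[OF sf h] fh_1[OF sf h])
  next
    fix a b assume "a \<in> adj L x" "b \<in> adj L x"
    then obtain f g where f: "Lpoly L f" "a = poly f x" and g: "Lpoly L g" "b = poly g x"
      by (auto simp: adj_def)
    have "\<tau>' (a + b) = \<tau>' (poly (f + g) x)" using f g by simp
    also have "\<dots> = poly (map_poly \<tau> (f + g)) y" by (rule key[OF Lpoly_add[OF sf f(1) g(1)]])
    also have "\<dots> = \<tau>' a + \<tau>' b" using f g key by (simp add: mp_add[OF sf h])
    finally show "\<tau>' (a + b) = \<tau>' a + \<tau>' b" .
    have "\<tau>' (a * b) = \<tau>' (poly (f * g) x)" using f g by simp
    also have "\<dots> = poly (map_poly \<tau> (f * g)) y" by (rule key[OF Lpoly_mult[OF sf f(1) g(1)]])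
    also have "\<dots> = \<tau>' a * \<tau>' b" using f g key by (simp add: mp_mult[OF sf h])
    finally show "\<tau>' (a * b) = \<tau>' a * \<tau>' b" .
  qed
  moreover have "\<forall>a\<in>L. \<tau>' a = \<tau> a"
  proof
    fix a assume a: "a \<in> L"
    have "\<tau>' (poly [:a:] x) = poly (map_poly \<tau> [:a:]) y" by (rule key[OF Lpoly_const[OF sf a]])
    then show "\<tau>' a = \<tau> a" by (simp add: mp_const[OF sf h])
  qed
  moreover have "\<tau>' x = y"
  proof -
    have "\<tau>' (poly [:0,1:] x) = poly (map_poly \<tau> [:0,1:]) y" by (rule key[OF Lpoly_X[OF sf]])
    then show ?thesis by (simp add: mp_pCons[OF sf h] mp_const[OF sf h] fh_0[OF sf h] fh_1[OF sf h])
  qed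
  moreover have "\<tau>' ` adj L x \<subseteq> Qal"
  proof
    have mM: "lead_coeff (map_poly \<tau> M) = 1" using mp_monic[OF sf h Mp(2)] by simp
    have "Lpoly Qal (map_poly \<tau> M)" using Mp(1) tQ by (auto simp: Lpoly_def mp_coeff[OF sf h])
    then have "algebraic y"
      using mM y by (intro algebraic_root_monic[of "map_poly \<tau> M"]) (auto simp: Lpoly_def Qal_def M_def)
    fix z assume "z \<in> \<tau>' ` adj L x"
    then obtain f where f: "Lpoly L f" "z = \<tau>' (poly f x)" by (auto simp: adj_def)
    have "Lpoly Qal (map_poly \<tau> f)" using f(1) tQ by (auto simp: Lpoly_def mp_coeff[OF sf h])
    then have "poly (map_poly \<tau> f) y \<in> Qal" using \<open>algebraic y\<close>
      by (intro Lpoly_poly[OF Qal_subfield]) (auto simp: Qal_def)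
    then show "z \<in> Qal" using f key by simp
  qed
  ultimately show ?thesis by blast
qed

lemma coeff_linear_power_pred: "coeff ([:a, 1:] ^ Suc n) n = of_nat (Suc n) * (a :: complex)"
proof (induction n)
  case 0 then show ?case by simp
next
  case (Suc n)
  have "[:a, 1:] ^ Suc (Suc n) = smult a ([:a, 1:] ^ Suc n) + pCons 0 ([:a, 1:] ^ Suc n)"
    by (simp add: power_Suc[of _ "Suc n"])
  then have "coeff ([:a, 1:] ^ Suc (Suc n)) (Suc n) = a * coeff ([:a, 1:] ^ Suc n) (Suc n) + coeff ([:a, 1:] ^ Suc n) n"
    by simp
  also have "\<dots> = a + of_nat (Suc n) * a" using Suc coeff_linear_power[of a "Suc n"] by simp
  finally show ?case by (simp add: algebra_simps)
qed

lemma other_root: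
  assumes sf: "is_subfield L" and alg: "alg_over L x" and xL: "x \<notin> L"
  shows "\<exists>x'. poly (minp L x) x' = 0 \<and> x' \<noteq> x"
proof (rule ccontr)
  assume "\<not> ?thesis"
  then have allx: "poly (minp L x) z = 0 \<Longrightarrow> z = x" for z by blast
  define M where "M = minp L x"
  have Mp: "Lpoly L M" "lead_coeff M = 1" "degree M \<noteq> 0"
    using minp_L[OF sf alg] minp_monic[OF sf alg] minp_degree[OF sf alg] by (auto simp: M_def)
  obtain root where r: "smult (lead_coeff M) (\<Prod>i<degree M. [:-root i, 1:]) = M"
    using complex_poly_decompose' by blast
  have "root i = x" if "i < degree M" for i
  proof -
    have "poly (\<Prod>i<degree M. [:-root i, 1:]) (root i) = 0"
      using that by (auto simp: poly_prod prod_zero_iff)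
    moreover have "poly M (root i) = poly (smult (lead_coeff M) (\<Prod>i<degree M. [:-root i, 1:])) (root i)"
      using r by simp
    ultimately have "poly M (root i) = 0" using Mp(2) by simp
    then show ?thesis using allx by (simp add: M_def)
  qed
  then have "M = (\<Prod>i<degree M. [:-x, 1:])" using r Mp(2) by simp
  then have Meq: "M = [:-x, 1:] ^ degree M" by simp
  obtain n where n: "degree M = Suc n" using Mp(3) by (cases "degree M") auto
  have "coeff M n = of_nat (Suc n) * (- x)" using coeff_linear_power_pred[of "-x" n] Meq n by simp
  moreover have "coeff M n \<in> L" using Mp(1) by (simp add: Lpoly_def)
  ultimately have "- (coeff M n / of_nat (Suc n)) \<in> L" using sf_uminus[OF sf] sf_divide[OF sf] sf_of_nat[OF sf] by blast
  moreover have "- (coeff M n / of_nat (Suc n)) = x" using \<open>coeff M n = _\<close> by (simp del: of_nat_Suc)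
  ultimately show False using xL by simp
qed


definition good :: "(complex \<times> complex) set \<Rightarrow> (complex \<times> complex) set \<Rightarrow> bool" where
  "good G0 G \<longleftrightarrow> G0 \<subseteq> G \<and> single_valued G \<and> is_subfield (Domain G) \<and> Domain G \<subseteq> Qal \<and> Range G \<subseteq> Qal \<and>
     (\<forall>p\<in>G. \<forall>q\<in>G. (fst p + fst q, snd p + snd q) \<in> G \<and> (fst p * fst q, snd p * snd q) \<in> G)"

lemma graph_good:
  assumes sf: "is_subfield E" and EQ: "E \<subseteq> Qal" and h: "fhom E \<tau>" and tQ: "\<tau> ` E \<subseteq> Qal"
    and G: "G = {(z, \<tau> z) | z. z \<in> E}" and G0: "G0 \<subseteq> G"
  shows "good G0 G"
proof -
  have D: "Domain G = E" using G by auto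
  show ?thesis unfolding good_def
  proof (intro conjI)
    show "single_valued G" using G by (auto simp: single_valued_def)
    show "Range G \<subseteq> Qal" using G tQ by auto
    show "\<forall>p\<in>G. \<forall>q\<in>G. (fst p + fst q, snd p + snd q) \<in> G \<and> (fst p * fst q, snd p * snd q) \<in> G"
      using G fh_add[OF sf h] fh_mult[OF sf h] sf_add[OF sf] sf_mult[OF sf] by auto
  qed (use D sf EQ G0 in auto)
qed

lemma chain_good:
  assumes C: "C \<in> chains {G. good G0 G}" and ne: "C \<noteq> {}"
  shows "good G0 (\<Union>C)"
proof -
  have Cg: "\<And>G. G \<in> C \<Longrightarrow> good G0 G" and ch: "\<And>A B. A \<in> C \<Longrightarrow> B \<in> C \<Longrightarrow> A \<subseteq> B \<or> B \<subseteq> A"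
    using C unfolding chains_def chain_subset_def by blast+
  have g1: "G0 \<subseteq> G" and g2: "single_valued G" and g3: "is_subfield (Domain G)"
    and g4: "Domain G \<subseteq> Qal" and g5: "Range G \<subseteq> Qal"
    and g6: "\<And>p q. p \<in> G \<Longrightarrow> q \<in> G \<Longrightarrow> (fst p + fst q, snd p + snd q) \<in> G \<and> (fst p * fst q, snd p * snd q) \<in> G"
    if "G \<in> C" for G
    using Cg[OF that] unfolding good_def by blast+
  have two: "\<exists>G\<in>C. p \<in> G \<and> q \<in> G" if "p \<in> \<Union>C" "q \<in> \<Union>C" for p q
  proof -
    from that obtain A where "A \<in> C" "p \<in> A" by blast
    moreover from that obtain B where "B \<in> C" "q \<in> B" by blast
    ultimately show ?thesis using ch[of A B] by blast
  qed
  obtain G1 where G1: "G1 \<in> C" using ne by blast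
  have "G0 \<subseteq> \<Union>C" using g1[OF G1] G1 by blast
  moreover have "single_valued (\<Union>C)"
    unfolding single_valued_def
  proof (intro allI impI)
    fix a b c assume "(a, b) \<in> \<Union>C" "(a, c) \<in> \<Union>C"
    then obtain G where "G \<in> C" "(a, b) \<in> G" "(a, c) \<in> G" using two by blast
    then show "b = c" using g2[of G] unfolding single_valued_def by blast
  qed
  moreover have "Domain (\<Union>C) \<subseteq> Qal"
  proof
    fix a assume "a \<in> Domain (\<Union>C)"
    then obtain G where "G \<in> C" "a \<in> Domain G" by blast
    then show "a \<in> Qal" using g4 by blast
  qed
  moreover have "Range (\<Union>C) \<subseteq> Qal"
  proof
    fix a assume "a \<in> Range (\<Union>C)"
    then obtain G where "G \<in> C" "a \<in> Range G" by blast
    then show "a \<in> Qal" using g5 by blast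
  qed
  moreover have "\<forall>p\<in>\<Union>C. \<forall>q\<in>\<Union>C. (fst p + fst q, snd p + snd q) \<in> \<Union>C \<and> (fst p * fst q, snd p * snd q) \<in> \<Union>C"
  proof (intro ballI)
    fix p q assume "p \<in> \<Union>C" "q \<in> \<Union>C"
    then obtain G where G: "G \<in> C" "p \<in> G" "q \<in> G" using two by blast
    from g6[OF G] G(1) show "(fst p + fst q, snd p + snd q) \<in> \<Union>C \<and> (fst p * fst q, snd p * snd q) \<in> \<Union>C"
      by blast
  qed
  moreover have "is_subfield (Domain (\<Union>C))"
    unfolding is_subfield_def
  proof (intro conjI ballI)
    have "0 \<in> Domain G1" "1 \<in> Domain G1" using g3[OF G1] unfolding is_subfield_def by blast+
    then show "0 \<in> Domain (\<Union>C)" "1 \<in> Domain (\<Union>C)" using G1 by blast+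
  next
    fix a b assume "a \<in> Domain (\<Union>C)" "b \<in> Domain (\<Union>C)"
    then obtain a' b' where "(a, a') \<in> \<Union>C" "(b, b') \<in> \<Union>C" by blast
    then obtain G where G: "G \<in> C" "(a, a') \<in> G" "(b, b') \<in> G" using two by blast
    from g6[OF G(1) G(2) G(3)] have "(a + b, a' + b') \<in> G" "(a * b, a' * b') \<in> G" by simp_all
    then show "a + b \<in> Domain (\<Union>C)" "a * b \<in> Domain (\<Union>C)" using G(1) by blast+
  next
    fix a assume "a \<in> Domain (\<Union>C)"
    then obtain G where G: "G \<in> C" "a \<in> Domain G" by blast
    then have "- a \<in> Domain G" "inverse a \<in> Domain G" using g3[OF G(1)] unfolding is_subfield_def by blast+
    then show "- a \<in> Domain (\<Union>C)" "inverse a \<in> Domain (\<Union>C)" using G(1) by blast+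
  qed
  ultimately show ?thesis unfolding good_def by blast
qed

lemma exists_aut:
  assumes sf: "is_subfield L" and LQ: "L \<subseteq> Qal" and xQ: "x \<in> Qal" and xL: "x \<notin> L"
  shows "\<exists>\<sigma>. gal_aut \<sigma> \<and> (\<forall>a\<in>L. \<sigma> a = a) \<and> \<sigma> x \<noteq> x"
proof -
  have alg: "alg_over L x" by (rule alg_over_Qal[OF sf xQ])
  obtain x' where x': "poly (minp L x) x' = 0" "x' \<noteq> x" using other_root[OF sf alg xL] by blast
  have "poly (map_poly (\<lambda>z. z) (minp L x)) x' = 0" using x' by simp
  from extend_hom[OF sf LQ fhom_id _ xQ this] LQ
  obtain \<tau>1 where t1: "fhom (adj L x) \<tau>1" "\<forall>a\<in>L. \<tau>1 a = a" "\<tau>1 x = x'" "\<tau>1 ` adj L x \<subseteq> Qal"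
    by auto
  define E0 where "E0 = adj L x"
  have E0: "is_subfield E0" "E0 \<subseteq> Qal" "L \<subseteq> E0" "x \<in> E0"
    using adj_subfield[OF sf LQ xQ] adj_Qal[OF sf LQ xQ] adj_L[OF sf LQ xQ] adj_x[OF sf LQ xQ]
    by (auto simp: E0_def)
  define G0 where "G0 = {(z, \<tau>1 z) | z. z \<in> E0}"
  have gG0: "good G0 G0" using graph_good[OF E0(1) E0(2) t1(1)[folded E0_def] t1(4)[folded E0_def] G0_def] by simp
  have "\<forall>C\<in>chains {G. good G0 G}. \<exists>U\<in>{G. good G0 G}. \<forall>X\<in>C. X \<subseteq> U"
  proof
    fix C assume C: "C \<in> chains {G. good G0 G}"
    show "\<exists>U\<in>{G. good G0 G}. \<forall>X\<in>C. X \<subseteq> U"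
    proof (cases "C = {}")
      case True then show ?thesis using gG0 by auto
    next
      case False then show ?thesis using chain_good[OF C False] by auto
    qed
  qed
  from Zorn_Lemma2[OF this] obtain M where M: "good G0 M" "\<And>X. good G0 X \<Longrightarrow> M \<subseteq> X \<Longrightarrow> X = M"
    by auto
  define \<sigma> where "\<sigma> z = (THE w. (z, w) \<in> M)" for z
  define E where "E = Domain M"
  have sv: "single_valued M" using M(1) by (simp add: good_def)
  have sig: "\<sigma> z = w" if "(z, w) \<in> M" for z w
    unfolding \<sigma>_def using that sv by (auto simp: single_valued_def)
  have inM: "(z, \<sigma> z) \<in> M" if "z \<in> E" for z
    using that sig unfolding E_def by auto
  have sfE: "is_subfield E" and EQ: "E \<subseteq> Qal" and RQ: "Range M \<subseteq> Qal" and G0M: "G0 \<subseteq> M"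
    using M(1) by (auto simp: good_def E_def)
  have cl: "\<And>p q. p \<in> M \<Longrightarrow> q \<in> M \<Longrightarrow> (fst p + fst q, snd p + snd q) \<in> M \<and> (fst p * fst q, snd p * snd q) \<in> M"
    using M(1) unfolding good_def by blast
  have sigL: "\<sigma> a = a" if "a \<in> L" for a
  proof -
    have "(a, \<tau>1 a) \<in> G0" using that E0(3) by (auto simp: G0_def)
    then show ?thesis using G0M sig t1(2) that by auto
  qed
  have sigx: "\<sigma> x = x'"
  proof -
    have "(x, \<tau>1 x) \<in> G0" using E0(4) by (auto simp: G0_def)
    then show ?thesis using G0M sig t1(3) by auto
  qed
  have hE: "fhom E \<sigma>"
    unfolding fhom_def
  proof (intro conjI ballI)
    have "(1, \<tau>1 1) \<in> G0" using sf_1[OF E0(1)] by (auto simp: G0_def)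
    moreover have "\<tau>1 1 = 1" using t1(1) by (simp add: fhom_def)
    ultimately show "\<sigma> 1 = 1" using G0M sig by auto
  next
    fix a b assume "a \<in> E" "b \<in> E"
    then have "(a, \<sigma> a) \<in> M" "(b, \<sigma> b) \<in> M" using inM by auto
    from cl[OF this] show "\<sigma> (a + b) = \<sigma> a + \<sigma> b" "\<sigma> (a * b) = \<sigma> a * \<sigma> b" using sig by auto
  qed
  have sQ: "\<sigma> ` E \<subseteq> Qal" using inM RQ by force
  have EQal: "E = Qal"
  proof (rule ccontr)
    assume "E \<noteq> Qal"
    then obtain y where y: "y \<in> Qal" "y \<notin> E" using EQ by auto
    have algy: "alg_over E y" by (rule alg_over_Qal[OF sfE y(1)])
    have "degree (map_poly \<sigma> (minp E y)) \<noteq> 0"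
      using mp_monic[OF sfE hE minp_monic[OF sfE algy]] minp_degree[OF sfE algy] by simp
    then have "\<not> constant (poly (map_poly \<sigma> (minp E y)))" by (simp add: constant_degree)
    then obtain y' where y': "poly (map_poly \<sigma> (minp E y)) y' = 0"
      using fundamental_theorem_of_algebra by blast
    from extend_hom[OF sfE EQ hE sQ y(1) y'] obtain \<tau>' where
      t': "fhom (adj E y) \<tau>'" "\<forall>a\<in>E. \<tau>' a = \<sigma> a" "\<tau>' y = y'" "\<tau>' ` adj E y \<subseteq> Qal" by blast
    define G' where "G' = {(z, \<tau>' z) | z. z \<in> adj E y}"
    have MG': "M \<subseteq> G'"
    proof
      fix p assume p: "p \<in> M"
      then have "fst p \<in> E" unfolding E_def by (metis Domain.DomainI prod.collapse)
      moreover have "snd p = \<sigma> (fst p)" using sig p by (metis prod.collapse)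
      ultimately show "p \<in> G'" using adj_L[OF sfE EQ y(1)] t'(2) unfolding G'_def
        by (metis (mono_tags, lifting) mem_Collect_eq prod.collapse subsetD)
    qed
    have "good G0 G'"
      by (rule graph_good[OF adj_subfield[OF sfE EQ y(1)] adj_Qal[OF sfE EQ y(1)] t'(1) t'(4) G'_def])
         (use G0M MG' in auto)
    then have "G' = M" using M(2) MG' by auto
    moreover have "(y, \<tau>' y) \<in> G'" using adj_x[OF sfE EQ y(1)] by (auto simp: G'_def)
    ultimately show False using y(2) unfolding E_def by force
  qed
  have hQ: "fhom Qal \<sigma>" using hE EQal by simp
  have sQQ: "\<sigma> ` Qal \<subseteq> Qal" using sQ EQal by simp
  have inj: "inj_on \<sigma> Qal" using fh_inj[OF Qal_subfield hQ] by (auto simp: inj_on_def)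
  have surj: "Qal \<subseteq> \<sigma> ` Qal"
  proof
    fix y assume "y \<in> Qal"
    then obtain P where P: "\<forall>i. coeff P i \<in> \<int>" "P \<noteq> 0" "poly P y = 0"
      by (auto simp: Qal_def algebraic_def)
    define Z where "Z = {z. poly P z = 0}"
    have fZ: "finite Z" using poly_roots_finite[OF P(2)] by (simp add: Z_def)
    have ZQ: "Z \<subseteq> Qal" using P by (auto simp: Z_def Qal_def intro: algebraicI)
    have PL: "Lpoly Qal P" using P(1) sf_Ints[OF Qal_subfield] by (auto simp: Lpoly_def)
    have mP: "map_poly \<sigma> P = P"
      by (intro poly_eqI) (simp add: mp_coeff[OF Qal_subfield hQ] fh_Ints[OF Qal_subfield hQ] P(1))
    have "\<sigma> ` Z \<subseteq> Z"
    proof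
      fix w assume "w \<in> \<sigma> ` Z"
      then obtain z where z: "z \<in> Z" "w = \<sigma> z" by auto
      have "poly P w = poly (map_poly \<sigma> P) (\<sigma> z)" using z mP by simp
      also have "\<dots> = \<sigma> (poly P z)" using mp_poly[OF Qal_subfield hQ PL] z ZQ by auto
      also have "\<dots> = 0" using z fh_0[OF Qal_subfield hQ] by (simp add: Z_def)
      finally show "w \<in> Z" by (simp add: Z_def)
    qed
    moreover have "inj_on \<sigma> Z" using inj ZQ inj_on_subset by blast
    ultimately have "\<sigma> ` Z = Z" using endo_inj_surj fZ by blast
    moreover have "y \<in> Z" using P(3) by (simp add: Z_def)
    ultimately show "y \<in> \<sigma> ` Qal" using ZQ by blast
  qed
  have "gal_aut \<sigma>"
    unfolding gal_aut_def bij_betw_def using inj sQQ surj hQ by (auto simp: fhom_def)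
  then show ?thesis using sigL sigx x'(2) by blast
qed


lemma map_poly_hom_add:
  assumes "f 0 = 0" "\<And>x y. f (x + y) = f x + f y"
  shows "map_poly f (p + q) = map_poly f p + map_poly f q"
  by (intro poly_eqI) (simp add: coeff_map_poly assms)

lemma map_poly_hom_diff:
  fixes f :: "'a::comm_ring_1 \<Rightarrow> 'b::comm_ring_1"
  assumes "f 0 = 0" "\<And>x y. f (x - y) = f x - f y"
  shows "map_poly f (p - q) = map_poly f p - map_poly f q"
  by (intro poly_eqI) (simp add: coeff_map_poly assms)

lemma map_poly_hom_mult:
  fixes f :: "'a::comm_ring_1 \<Rightarrow> 'b::comm_ring_1"
  assumes "f 0 = 0" "\<And>x y. f (x + y) = f x + f y" "\<And>x y. f (x * y) = f x * f y"
  shows "map_poly f (p * q) = map_poly f p * map_poly f q"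
proof (induction p)
  case 0 then show ?case by simp
next
  case (pCons a p)
  have "map_poly f (pCons a p * q) = map_poly f (smult a q + pCons 0 (p * q))" by simp
  also have "\<dots> = smult (f a) (map_poly f q) + pCons 0 (map_poly f p * map_poly f q)"
    by (simp add: map_poly_hom_add assms map_poly_smult map_poly_pCons pCons.IH)
  also have "\<dots> = map_poly f (pCons a p) * map_poly f q" by (simp add: map_poly_pCons assms)
  finally show ?case .
qed

lemma map_poly_hom_sum:
  fixes f :: "'a::comm_ring_1 \<Rightarrow> 'b::comm_ring_1"
  assumes "f 0 = 0" "\<And>x y. f (x + y) = f x + f y"
  shows "map_poly f (sum g I) = (\<Sum>i\<in>I. map_poly f (g i))"
  by (induction I rule: infinite_finite_induct) (auto simp: map_poly_hom_add assms)

abbreviation rc :: "rat poly \<Rightarrow> complex poly" where "rc \<equiv> map_poly of_rat"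

lemma rc_add: "rc (p + q) = rc p + rc q" by (rule map_poly_hom_add) (auto simp: of_rat_add)
lemma rc_diff: "rc (p - q) = rc p - rc q" by (rule map_poly_hom_diff) (auto simp: of_rat_diff)
lemma rc_mult: "rc (p * q) = rc p * rc q" by (rule map_poly_hom_mult) (auto simp: of_rat_add of_rat_mult)
lemma rc_sum: "rc (sum g I) = (\<Sum>i\<in>I. rc (g i))" by (rule map_poly_hom_sum) (auto simp: of_rat_add)

lemma ir_mult: "map_poly (of_int :: int \<Rightarrow> 'a::comm_ring_1) (p * q) = map_poly of_int p * map_poly of_int q"
  by (rule map_poly_hom_mult) auto

lemma ir_smult: "map_poly (of_int :: int \<Rightarrow> 'a::comm_ring_1) (smult c p) = smult (of_int c) (map_poly of_int p)"
  by (rule map_poly_smult) auto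

lemma ir_inj: "map_poly (of_int :: int \<Rightarrow> 'a::{comm_ring_1,ring_char_0}) p = map_poly of_int q \<Longrightarrow> p = q"
  by (metis (mono_tags, lifting) coeff_map_poly of_int_0 of_int_eq_iff poly_eqI)

lemma fd_poly:
  assumes "finite B" "\<And>k. z ^ k \<in> Q.span B"
  shows "\<exists>P::rat poly. P \<noteq> 0 \<and> degree P \<le> card B \<and> poly (rc P) z = 0"
proof -
  define N where "N = card B"
  define S where "S = (\<lambda>k. z ^ k) ` {0..N}"
  show ?thesis
  proof (cases "inj_on (\<lambda>k. z ^ k) {0..N}")
    case False
    then obtain i j where ij: "i \<le> N" "j \<le> N" "i \<noteq> j" "z ^ i = z ^ j"
      unfolding inj_on_def by auto
    define P :: "rat poly" where "P = monom 1 i - monom 1 j"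
    have "P \<noteq> 0" using ij by (simp add: P_def monom_eq_iff')
    moreover have "degree P \<le> N" using ij by (intro degree_le) (auto simp: P_def coeff_monom)
    moreover have "rc P = monom 1 i - monom 1 j" by (simp add: P_def rc_diff map_poly_monom)
    then have "poly (rc P) z = 0" using ij by (simp add: poly_monom)
    ultimately show ?thesis by (auto simp: N_def)
  next
    case True
    have cS: "card S = N + 1" using True by (simp add: S_def card_image)
    have fS: "finite S" by (simp add: S_def)
    have "S \<subseteq> Q.span B" using assms(2) by (auto simp: S_def)
    then have "Q.dependent S"
      using Q.independent_span_bound[OF assms(1), of S] cS by (auto simp: N_def)
    then obtain u where u: "\<exists>v\<in>S. u v \<noteq> 0" "(\<Sum>v\<in>S. of_rat (u v) * v) = 0"
      using Q.dependent_finite[OF fS] by auto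
    define P :: "rat poly" where "P = (\<Sum>k\<in>{0..N}. monom (u (z ^ k)) k)"
    have cP: "coeff P n = (if n \<le> N then u (z ^ n) else 0)" for n
      by (simp add: P_def coeff_sum coeff_monom)
    obtain k where k: "k \<le> N" "u (z ^ k) \<noteq> 0" using u(1) by (auto simp: S_def)
    have P0: "P \<noteq> 0"
    proof
      assume "P = 0" then have "coeff P k = 0" by simp
      with k cP show False by simp
    qed
    have dP: "degree P \<le> N" by (rule degree_le) (simp add: cP)
    have "poly (rc P) z = (\<Sum>k\<in>{0..N}. of_rat (u (z ^ k)) * z ^ k)"
      by (simp add: P_def rc_sum poly_sum map_poly_monom poly_monom)
    also have "\<dots> = (\<Sum>v\<in>S. of_rat (u v) * v)"
      unfolding S_def by (subst sum.reindex[OF True]) (simp add: o_def)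
    also have "\<dots> = 0" by (rule u(2))
    finally show ?thesis using P0 dP by (auto simp: N_def)
  qed
qed


lemma rat_denom: "\<exists>a::int. a > 0 \<and> (\<exists>G. map_poly of_int G = smult (of_int a) (g :: rat poly))"
proof (induction g)
  case 0 then show ?case by (intro exI[of _ 1]) (auto intro: exI[of _ 0])
next
  case (pCons c g)
  then obtain a G where aG: "a > 0" "map_poly of_int G = smult (of_int a) g" by blast
  obtain u v where uv: "c = of_int u / of_int v" "v > 0"
    by (metis Fract_of_int_quotient Rat_cases)
  define G' where "G' = pCons (u * a) (smult v G)"
  have "map_poly of_int G' = pCons (of_int (u * a)) (smult (of_int v) (smult (of_int a) g))"
    by (simp add: G'_def map_poly_pCons ir_smult aG(2))
  also have "\<dots> = smult (of_int (a * v)) (pCons c g)"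
    using uv by (simp add: field_simps)
  finally show ?case using aG uv by (intro exI[of _ "a * v"]) auto
qed

lemma lead_ir: "lead_coeff (map_poly (of_int :: int \<Rightarrow> 'a::{comm_ring_1,ring_char_0}) G) = of_int (lead_coeff G)"
  and degree_ir: "degree (map_poly (of_int :: int \<Rightarrow> 'a::{comm_ring_1,ring_char_0}) G) = degree G"
  by (simp_all add: degree_map_poly coeff_map_poly)

lemma int_multiple_prim:
  assumes g: "lead_coeff (g :: rat poly) = 1"
  shows "\<exists>a::int. a > 0 \<and> (\<exists>G. map_poly of_int G = smult (of_int a) g \<and> content G = 1)"
proof -
  define A where "A = {a::nat. a > 0 \<and> (\<exists>G. map_poly of_int G = smult (of_nat a) g)}"
  obtain a G where aG: "(a::int) > 0" "map_poly of_int G = smult (of_int a) g" using rat_denom by blast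
  have "(of_nat (nat a) :: rat) = of_int a" using aG(1) by simp
  then have "nat a \<in> A" using aG unfolding A_def by (intro CollectI conjI exI[of _ G]) auto
  define a0 where "a0 = (LEAST a. a \<in> A)"
  have a0A: "a0 \<in> A" unfolding a0_def using \<open>nat a \<in> A\<close> by (rule LeastI)
  then obtain G0 where G0: "a0 > 0" "map_poly of_int G0 = smult (of_nat a0) g" by (auto simp: A_def)
  have min: "a0 \<le> b" if "b \<in> A" for b unfolding a0_def using that by (rule Least_le)
  have "g \<noteq> 0" using g by auto
  have lG0: "lead_coeff G0 = int a0"
  proof -
    have "(of_int (lead_coeff G0) :: rat) = lead_coeff (map_poly of_int G0 :: rat poly)"
      by (rule lead_ir[symmetric])
    also have "\<dots> = lead_coeff (smult (of_nat a0) g)" using G0(2) by simp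
    also have "\<dots> = of_int (int a0)" using g G0(1) by simp
    finally show ?thesis by (simp only: of_int_eq_iff)
  qed
  have G00: "G0 \<noteq> 0" using lG0 G0(1) by auto
  define c where "c = content G0"
  have "c \<noteq> 0" using G00 by (simp add: c_def)
  moreover have "\<bar>c\<bar> = c" using normalize_content[of G0] by (simp add: c_def)
  ultimately have c0: "c > 0" by linarith
  have "c dvd int a0" using lG0 content_dvd_coeff[of G0 "degree G0"] by (simp add: c_def)
  then obtain a1 where a1: "int a0 = c * a1" by (elim dvdE)
  have "0 < c * a1" using a1 G0(1) by simp
  then have a1p: "a1 > 0" using c0 by (simp add: zero_less_mult_iff)
  have ca: "(of_nat a0 :: rat) = of_int c * of_int a1"
  proof -
    have "(of_int (int a0)::rat) = of_int (c * a1)" using a1 by simp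
    then show ?thesis by simp
  qed
  define P where "P = primitive_part G0"
  have "(map_poly of_int G0 :: rat poly) = map_poly of_int (smult c P)"
    by (simp only: P_def c_def content_times_primitive_part)
  also have "\<dots> = smult (of_int c) (map_poly of_int P)" by (rule ir_smult)
  finally have eq1: "(map_poly of_int G0 :: rat poly) = smult (of_int c) (map_poly of_int P)" .
  have eq2: "(map_poly of_int G0 :: rat poly) = smult (of_int c) (smult (of_int a1) g)"
    unfolding G0(2) ca by (simp only: smult_smult)
  have "(of_int c :: rat) \<noteq> 0" using c0 by simp
  moreover have "smult (of_int c) (map_poly of_int P) = smult (of_int c) (smult (of_int a1) (g :: rat poly))"
    using eq1 eq2 by simp
  ultimately have "map_poly of_int P = smult (of_int a1) g" by (rule smult_cancel)
  moreover have "(of_nat (nat a1) :: rat) = of_int a1" using a1p by simp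
  ultimately have "nat a1 \<in> A" using a1p unfolding A_def by (intro CollectI conjI exI[of _ P]) auto
  then have "a0 \<le> nat a1" by (rule min)
  then have "int a0 \<le> a1" using a1p by linarith
  then have "(c - 1) * a1 \<le> 0" using a1 by (simp add: algebra_simps)
  then have "c - 1 \<le> 0" using a1p by (simp add: mult_le_0_iff)
  then have "c = 1" using c0 by linarith
  then show ?thesis using G0 by (intro exI[of _ "int a0"]) (auto simp: c_def)
qed

lemma gauss_monic:
  assumes g: "lead_coeff (g :: rat poly) = 1" and h: "lead_coeff h = 1"
    and F: "g * h = map_poly of_int F" "content F = 1"
  shows "\<exists>G. map_poly of_int G = g"
proof -
  obtain a G where aG: "a > 0" "map_poly of_int G = smult (of_int a) g" "content G = 1"
    using int_multiple_prim[OF g] by blast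
  obtain b H where bH: "b > 0" "map_poly of_int H = smult (of_int b) h" "content H = 1"
    using int_multiple_prim[OF h] by blast
  have "map_poly of_int (G * H) = (map_poly of_int (smult (a * b) F) :: rat poly)"
    by (simp add: ir_mult ir_smult aG(2) bH(2) F(1)[symmetric] mult_ac)
  then have "G * H = smult (a * b) F" by (rule ir_inj)
  then have "content (G * H) = content (smult (a * b) F)" by simp
  then have "1 = \<bar>a * b\<bar>" by (simp add: content_mult aG(3) bH(3) F(2))
  then have "a = 1" using aG(1) bH(1) by (smt (verit) abs_mult mult_le_cancel_left1)
  then show ?thesis using aG(2) by auto
qed

lemma coeff_bound_prod:
  fixes r :: "nat \<Rightarrow> complex"
  assumes "finite I" "\<forall>i\<in>I. cmod (r i) \<le> 1"
  shows "cmod (coeff (\<Prod>i\<in>I. [:-r i, 1:]) j) \<le> 2 ^ card I"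
  using assms
proof (induction I arbitrary: j rule: finite_induct)
  case empty then show ?case by (simp add: coeff_1)
next
  case (insert x F)
  define q where "q = (\<Prod>i\<in>F. [:-r i, 1:])"
  have IH: "cmod (coeff q j) \<le> 2 ^ card F" for j using insert by (simp add: q_def)
  have "(\<Prod>i\<in>insert x F. [:-r i, 1:]) = [:-r x, 1:] * q" using insert by (simp add: q_def)
  also have "\<dots> = smult (- r x) q + pCons 0 q" by simp
  finally have c: "coeff (\<Prod>i\<in>insert x F. [:-r i, 1:]) j = - r x * coeff q j + coeff (pCons 0 q) j" by simp
  have b1: "cmod (- r x * coeff q j) \<le> 2 ^ card F"
  proof -
    have "cmod (- r x * coeff q j) = cmod (r x) * cmod (coeff q j)" by (simp add: norm_mult)
    also have "\<dots> \<le> 1 * 2 ^ card F"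
      using insert(4) IH[of j] by (intro mult_mono) auto
    finally show ?thesis by simp
  qed
  have b2: "cmod (coeff (pCons 0 q) j) \<le> 2 ^ card F"
    using IH by (cases j) auto
  have "cmod (coeff (\<Prod>i\<in>insert x F. [:-r i, 1:]) j) \<le> cmod (- r x * coeff q j) + cmod (coeff (pCons 0 q) j)"
    unfolding c by (rule norm_triangle_ineq)
  also have "\<dots> \<le> 2 ^ card (insert x F)" using b1 b2 insert by simp
  finally show ?case .
qed

lemma monic_bound:
  fixes p :: "complex poly"
  assumes "lead_coeff p = 1" "\<And>z. poly p z = 0 \<Longrightarrow> cmod z \<le> 1"
  shows "cmod (coeff p j) \<le> 2 ^ degree p"
proof -
  obtain root where r: "smult (lead_coeff p) (\<Prod>i<degree p. [:-root i, 1:]) = p"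
    using complex_poly_decompose' by blast
  have peq: "p = (\<Prod>i<degree p. [:-root i, 1:])" using r assms(1) by simp
  have "cmod (root i) \<le> 1" if "i < degree p" for i
  proof -
    have "poly (\<Prod>i<degree p. [:-root i, 1:]) (root i) = 0"
      using that by (auto simp: poly_prod prod_zero_iff)
    then have "poly p (root i) = 0" using peq by simp
    then show ?thesis by (rule assms(2))
  qed
  then have "cmod (coeff (\<Prod>i<degree p. [:-root i, 1:]) j) \<le> 2 ^ card {..<degree p}"
    by (intro coeff_bound_prod) auto
  then show ?thesis using peq by simp
qed

lemma roots_unity_finite:
  assumes sf: "is_subfield K" and foq: "finite_over_Q K"
  shows "finite (roots_of_unity_in K)"
proof -
  obtain B where B: "finite B" "B \<subseteq> K" "K \<subseteq> {\<Sum>b\<in>B. of_rat (c b) * b | c. True}"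
    using foq by (auto simp: finite_over_Q_def)
  have KS: "K \<subseteq> Q.span B"
  proof
    fix z assume "z \<in> K"
    then obtain c where "z = (\<Sum>b\<in>B. of_rat (c b) * b)" using B(3) by blast
    moreover have "(\<Sum>b\<in>B. of_rat (c b) * b) \<in> Q.span B"
      by (intro Q.span_sum) (auto intro: Q.span_scale Q.span_base)
    ultimately show "z \<in> Q.span B" by simp
  qed
  define N where "N = card B"
  define GS where "GS = {G::int poly. G \<noteq> 0 \<and> degree G \<le> N \<and> (\<forall>i. \<bar>coeff G i\<bar> \<le> 2 ^ N)}"
  define Ls where "Ls = {xs. set xs \<subseteq> {-(2^N)..(2^N)::int} \<and> length xs \<le> Suc N}"
  have "coeffs ` GS \<subseteq> Ls"
  proof
    fix xs assume "xs \<in> coeffs ` GS"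
    then obtain G where G: "G \<in> GS" "xs = coeffs G" by auto
    have "set xs \<subseteq> {-(2^N)..(2^N)}"
    proof
      fix y assume "y \<in> set xs"
      then obtain i where "i < length xs" "y = xs ! i" by (auto simp: in_set_conv_nth)
      then have "y = coeff G i" using G by (simp add: coeffs_nth length_coeffs_degree GS_def)
      then have "\<bar>y\<bar> \<le> 2 ^ N" using G(1) unfolding GS_def by blast
      then show "y \<in> {-(2^N)..(2^N)}" by (simp add: abs_le_iff minus_le_iff)
    qed
    moreover have "length xs \<le> Suc N" using G by (simp add: length_coeffs_degree GS_def)
    ultimately show "xs \<in> Ls" by (simp add: Ls_def)
  qed
  moreover have "finite Ls" unfolding Ls_def by (rule finite_lists_length_le) simp
  ultimately have "finite (coeffs ` GS)" by (rule finite_subset)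
  moreover have "inj_on coeffs GS" by (auto simp: inj_on_def coeffs_eq_iff)
  ultimately have fGS: "finite GS" by (rule finite_imageD)
  define S where "S = (\<Union>G\<in>GS. {z::complex. poly (map_poly of_int G) z = 0})"
  have fS: "finite S" unfolding S_def
  proof (intro finite_UN_I fGS)
    fix G assume "G \<in> GS"
    then have "map_poly (of_int :: int \<Rightarrow> complex) G \<noteq> 0" by (auto simp: GS_def map_poly_eq_0_iff)
    then show "finite {z::complex. poly (map_poly of_int G) z = 0}" by (rule poly_roots_finite)
  qed
  have "roots_of_unity_in K \<subseteq> S"
  proof
    fix \<zeta> assume "\<zeta> \<in> roots_of_unity_in K"
    then have zK: "\<zeta> \<in> K" and "\<exists>k>0. \<zeta> ^ k = 1" by (auto simp: roots_of_unity_in_def)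
    then obtain k where k: "k > 0" "\<zeta> ^ k = 1" by blast
    have pw: "\<zeta> ^ j \<in> K" for j
      by (induction j) (use sf zK in \<open>auto simp: is_subfield_def\<close>)
    have "\<zeta> ^ j \<in> Q.span B" for j using pw KS by blast
    then obtain P where P: "P \<noteq> 0" "degree P \<le> N" "poly (rc P) \<zeta> = 0"
      using fd_poly[OF B(1), of \<zeta>] by (auto simp: N_def)
    define Fr :: "rat poly" where "Fr = monom 1 k - 1"
    define Fi :: "int poly" where "Fi = monom 1 k - 1"
    have cFr: "coeff Fr k = 1" "\<And>n. n > k \<Longrightarrow> coeff Fr n = 0" using k(1) by (auto simp: Fr_def coeff_monom)
    have dFr: "degree Fr = k" using cFr by (intro antisym degree_le le_degree) auto
    have lFr: "lead_coeff Fr = 1" using cFr dFr by simp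
    have FiFr: "map_poly of_int Fi = Fr"
      by (simp add: Fi_def Fr_def map_poly_hom_diff map_poly_monom)
    have "content Fi dvd coeff Fi k" by (rule content_dvd_coeff)
    moreover have "coeff Fi k = 1" using k(1) by (simp add: Fi_def coeff_monom)
    ultimately have "\<bar>content Fi\<bar> = 1" by simp
    moreover have "\<bar>content Fi\<bar> = content Fi" using normalize_content[of Fi] by simp
    ultimately have cFi: "content Fi = 1" by simp
    define g where "g = gcd P Fr"
    have g0: "g \<noteq> 0" using P(1) by (simp add: g_def)
    have "unit_factor g = 1" using g0 by (simp add: g_def unit_factor_gcd)
    then have lg: "lead_coeff g = 1" using g0 by (simp add: unit_factor_poly_def one_pCons)
    have "g dvd Fr" by (simp add: g_def)
    then obtain h where h: "Fr = g * h" by (elim dvdE)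
    have lh: "lead_coeff h = 1" using lFr lg h by (simp add: lead_coeff_mult)
    obtain G where G: "map_poly of_int G = g"
      using gauss_monic[OF lg lh _ cFi] h FiFr by metis
    have dg: "degree g \<le> N" using dvd_imp_degree_le[of g P] P by (simp add: g_def)
    obtain u v where uv: "u * P + v * Fr = g"
      using bezout_coefficients_fst_snd[of P Fr] by (auto simp: g_def)
    have rFr: "rc Fr = monom 1 k - 1" by (simp add: Fr_def rc_diff map_poly_monom)
    have "poly (rc g) \<zeta> = poly (rc u) \<zeta> * poly (rc P) \<zeta> + poly (rc v) \<zeta> * poly (rc Fr) \<zeta>"
      unfolding uv[symmetric] by (simp add: rc_add rc_mult)
    also have "\<dots> = 0" using P(3) k(2) by (simp add: rFr poly_monom)
    finally have root: "poly (rc g) \<zeta> = 0" .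
    define q :: "complex poly" where "q = map_poly of_int G"
    have qg: "q = rc g" unfolding q_def G[symmetric] by (simp add: map_poly_map_poly o_def)
    have lG: "lead_coeff G = 1"
    proof -
      have "(of_int (lead_coeff G) :: rat) = lead_coeff g" using lead_ir[of G] G by metis
      then show ?thesis using lg by simp
    qed
    have lq: "lead_coeff q = 1" using lG by (simp add: q_def lead_ir)
    have dq: "degree q = degree G" by (simp add: q_def degree_ir)
    have dG: "degree G = degree g" using degree_ir[of G] G by metis
    have rq: "cmod z \<le> 1" if "poly q z = 0" for z
    proof -
      have "rc Fr = q * rc h" using h qg by (simp add: rc_mult)
      then have "poly (rc Fr) z = 0" using that by simp
      then have "z ^ k = 1" by (simp add: rFr poly_monom)
      then have "cmod z ^ k = 1 ^ k" by (metis norm_power norm_one power_one)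
      then have "cmod z = 1" using k(1) power_eq_iff_eq_base[of k "cmod z" 1] by simp
      then show ?thesis by simp
    qed
    have "\<bar>coeff G i\<bar> \<le> 2 ^ N" for i
    proof -
      have a: "cmod (coeff q i) \<le> 2 ^ degree q" by (rule monic_bound[OF lq rq])
      have c: "cmod (coeff q i) = of_int \<bar>coeff G i\<bar>" by (simp add: q_def coeff_map_poly)
      have b: "(2::real) ^ degree q \<le> 2 ^ N" by (rule power_increasing) (use dq dG dg in simp_all)
      have "(of_int \<bar>coeff G i\<bar> :: real) \<le> 2 ^ N" using a b c by linarith
      then have "(of_int \<bar>coeff G i\<bar> :: real) \<le> of_int (2 ^ N)" by simp
      then show ?thesis by (simp only: of_int_le_iff)
    qed
    moreover have "G \<noteq> 0" using lG by auto
    moreover have "degree G \<le> N" using dG dg by simp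
    ultimately have "G \<in> GS" by (simp add: GS_def)
    moreover have "poly (map_poly of_int G) \<zeta> = 0" using root qg by (simp add: q_def)
    ultimately show "\<zeta> \<in> S" by (auto simp: S_def)
  qed
  then show ?thesis using fS finite_subset by blast
qed


lemma gal_aut_fhom: assumes "gal_aut \<sigma>" shows "fhom Qal \<sigma>"
proof -
  have add: "\<And>a b. a \<in> Qal \<Longrightarrow> b \<in> Qal \<Longrightarrow> \<sigma> (a + b) = \<sigma> a + \<sigma> b"
    and mult: "\<And>a b. a \<in> Qal \<Longrightarrow> b \<in> Qal \<Longrightarrow> \<sigma> (a * b) = \<sigma> a * \<sigma> b"
    and inj: "inj_on \<sigma> Qal" using assms by (auto simp: gal_aut_def bij_betw_def)
  have Q0: "0 \<in> Qal" and Q1: "1 \<in> Qal" using Qal_subfield by (auto simp: is_subfield_def)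
  have s0: "\<sigma> 0 = 0" using add[OF Q0 Q0] by simp
  have "\<sigma> 1 \<noteq> 0" using inj Q0 Q1 s0 by (metis inj_on_contraD zero_neq_one)
  moreover have "\<sigma> 1 * \<sigma> 1 = \<sigma> 1" using mult[OF Q1 Q1] by simp
  ultimately have "\<sigma> 1 = 1" by simp
  then show ?thesis using add mult by (simp add: fhom_def)
qed

lemma gal_aut_id: "gal_aut (\<lambda>z. z)"
  by (simp add: gal_aut_def bij_betw_def)

lemma fh_power: "is_subfield L \<Longrightarrow> fhom L \<tau> \<Longrightarrow> a \<in> L \<Longrightarrow> \<tau> (a ^ n) = \<tau> a ^ n"
  by (induction n) (auto simp: fh_1 fh_mult sf_power)

lemma subfield_Inter: "(\<And>F. F \<in> S \<Longrightarrow> is_subfield F) \<Longrightarrow> is_subfield (\<Inter> S)"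
  unfolding is_subfield_def by blast

lemma gen_field_subfield: "is_subfield (gen_field a)"
  unfolding gen_field_def by (rule subfield_Inter) auto

lemma gen_field_in: "a \<in> gen_field a"
  unfolding gen_field_def by auto

lemma gen_field_least: "is_subfield F \<Longrightarrow> a \<in> F \<Longrightarrow> gen_field a \<subseteq> F"
  unfolding gen_field_def by auto

lemma galois_fixed:
  assumes gQ: "\<gamma> \<in> Qal"
  shows "fixed_field {\<sigma>. gal_aut \<sigma> \<and> \<sigma> \<gamma> = \<gamma>} = gen_field \<gamma>"
proof
  have GQ: "gen_field \<gamma> \<subseteq> Qal" by (rule gen_field_least[OF Qal_subfield gQ])
  show "gen_field \<gamma> \<subseteq> fixed_field {\<sigma>. gal_aut \<sigma> \<and> \<sigma> \<gamma> = \<gamma>}"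
  proof
    fix a assume a: "a \<in> gen_field \<gamma>"
    have "\<sigma> a = a" if s: "gal_aut \<sigma>" "\<sigma> \<gamma> = \<gamma>" for \<sigma>
    proof -
      have h: "fhom Qal \<sigma>" by (rule gal_aut_fhom[OF s(1)])
      note sf = Qal_subfield
      have "is_subfield {z \<in> Qal. \<sigma> z = z}"
        unfolding is_subfield_def
        using sf_0[OF sf] sf_1[OF sf] sf_add[OF sf] sf_mult[OF sf] sf_uminus[OF sf] sf_inverse[OF sf]
          fh_0[OF sf h] fh_1[OF sf h] fh_add[OF sf h] fh_mult[OF sf h] fh_uminus[OF sf h] fh_inverse[OF sf h]
        by auto
      moreover have "\<gamma> \<in> {z \<in> Qal. \<sigma> z = z}" using gQ s(2) by auto
      ultimately have "gen_field \<gamma> \<subseteq> {z \<in> Qal. \<sigma> z = z}" by (rule gen_field_least)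
      then show ?thesis using a by auto
    qed
    then show "a \<in> fixed_field {\<sigma>. gal_aut \<sigma> \<and> \<sigma> \<gamma> = \<gamma>}"
      using a GQ by (auto simp: fixed_field_def)
  qed
  show "fixed_field {\<sigma>. gal_aut \<sigma> \<and> \<sigma> \<gamma> = \<gamma>} \<subseteq> gen_field \<gamma>"
  proof
    fix x assume x: "x \<in> fixed_field {\<sigma>. gal_aut \<sigma> \<and> \<sigma> \<gamma> = \<gamma>}"
    show "x \<in> gen_field \<gamma>"
    proof (rule ccontr)
      assume "x \<notin> gen_field \<gamma>"
      moreover have "x \<in> Qal" using x by (simp add: fixed_field_def)
      ultimately obtain \<sigma> where "gal_aut \<sigma>" "\<forall>a\<in>gen_field \<gamma>. \<sigma> a = a" "\<sigma> x \<noteq> x"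
        using exists_aut[OF gen_field_subfield GQ] by blast
      moreover have "\<sigma> \<gamma> = \<gamma>" using calculation(2) gen_field_in by blast
      ultimately show False using x by (auto simp: fixed_field_def)
    qed
  qed
qed


lemma root_unity_pow_card:
  assumes sf: "is_subfield K" and fin: "finite (roots_of_unity_in K)" and z: "z \<in> roots_of_unity_in K"
  shows "z ^ card (roots_of_unity_in K) = 1"
proof -
  define R where "R = roots_of_unity_in K"
  have zK: "z \<in> K" and "\<exists>k>0. z ^ k = 1" using z by (auto simp: roots_of_unity_in_def)
  then obtain k where k: "k > 0" "z ^ k = 1" by blast
  have RK: "r \<in> K" "r \<noteq> 0" if "r \<in> R" for r
    using that by (auto simp: R_def roots_of_unity_in_def power_0_left split: if_splits)
  have mapsto: "(\<lambda>r. z * r) ` R \<subseteq> R"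
  proof
    fix w assume "w \<in> (\<lambda>r. z * r) ` R"
    then obtain r where r: "r \<in> R" "w = z * r" by auto
    then obtain j where j: "j > 0" "r ^ j = 1" by (auto simp: R_def roots_of_unity_in_def)
    have "(z * r) ^ (k * j) = 1"
      by (simp add: power_mult_distrib power_mult k(2) j(2)) (metis power_mult mult.commute j(2) power_one)
    moreover have "z * r \<in> K" using sf_mult[OF sf zK RK(1)[OF r(1)]] .
    ultimately show "w \<in> R" using r k j by (auto simp: R_def roots_of_unity_in_def intro!: exI[of _ "k * j"])
  qed
  have z0: "z \<noteq> 0" using k by (metis power_0_left less_not_refl2 zero_neq_one)
  have inj: "inj_on (\<lambda>r. z * r) R" using z0 by (auto simp: inj_on_def)
  have img: "(\<lambda>r. z * r) ` R = R" using endo_inj_surj[OF fin[folded R_def] mapsto inj] .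
  have "prod (\<lambda>r. r) R = prod (\<lambda>r. r) ((\<lambda>r. z * r) ` R)" using img by simp
  also have "\<dots> = prod (\<lambda>r. z * r) R" using prod.reindex[OF inj] by simp
  also have "\<dots> = z ^ card R * prod (\<lambda>r. r) R" by (simp add: prod.distrib)
  finally have "z ^ card R * prod (\<lambda>r. r) R = 1 * prod (\<lambda>r. r) R" by simp
  moreover have "prod (\<lambda>r. r) R \<noteq> 0" using RK(2) fin by (simp add: R_def prod_zero_iff)
  ultimately show ?thesis unfolding R_def by (metis mult_cancel_right)
qed

theorem mainTheorem9:
  fixes K :: "complex set" and p n m :: nat and \<pi> :: complex
  assumes "prime p"
    and "CM_galois_field K"
    and "n > 0"
    and "\<forall>w. padic_prime K p w \<longrightarrow> inertia_deg K p w * class_order K w dvd n"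
    and "m = card (roots_of_unity_in K)"
    and "\<pi> \<in> W0K_pn K p n"
  shows "fixed_field (stabilizer n \<pi>) = gen_field (\<pi> ^ (m * n))"
proof -
  have sfK: "is_subfield K" and KQ: "K \<subseteq> Qal" and foq: "finite_over_Q K"
    and Kstab: "\<And>\<sigma>. gal_aut \<sigma> \<Longrightarrow> \<sigma> ` K = K"
    using assms(2) by (auto simp: CM_galois_field_def)
  define R where "R = roots_of_unity_in K"
  have finR: "finite R" using roots_unity_finite[OF sfK foq] by (simp add: R_def)
  have "1 \<in> R" using sf_1[OF sfK] by (auto simp: R_def roots_of_unity_in_def)
  then have m0: "m > 0" using finR assms(5) R_def card_gt_0_iff by blast
  have w: "weil0 p \<pi>" and bK: "\<pi> ^ n \<in> K" using assms(6) by (auto simp: W0K_pn_def W0K_def)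
  have "cmod \<pi> = 1" using w gal_aut_id by (auto simp: weil0_def)
  then have p0: "\<pi> \<noteq> 0" by auto
  define \<beta> where "\<beta> = \<pi> ^ n"
  have b0: "\<beta> \<noteq> 0" using p0 by (simp add: \<beta>_def)
  have bK': "\<beta> \<in> K" using bK by (simp add: \<beta>_def)
  have bQ: "\<beta> \<in> Qal" using bK' KQ by auto
  define \<gamma> where "\<gamma> = \<beta> ^ m"
  have gamma: "\<pi> ^ (m * n) = \<gamma>" by (simp add: \<gamma>_def \<beta>_def power_mult[symmetric] mult.commute)
  have gQ: "\<gamma> \<in> Qal" using Qal_power[OF bQ] by (simp add: \<gamma>_def)
  have "stabilizer n \<pi> = {\<sigma>. gal_aut \<sigma> \<and> \<sigma> \<gamma> = \<gamma>}"
  proof (intro set_eqI iffI)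
    fix \<sigma> assume "\<sigma> \<in> stabilizer n \<pi>"
    then have s: "gal_aut \<sigma>" and "\<exists>c>0. n dvd c \<and> \<sigma> \<beta> ^ (c div n) = \<beta> ^ (c div n)"
      by (auto simp: stabilizer_def lim_eq_def \<beta>_def)
    then obtain c where c: "c > 0" "n dvd c" "\<sigma> \<beta> ^ (c div n) = \<beta> ^ (c div n)" by blast
    define t where "t = c div n"
    have t0: "t > 0" using c assms(3) by (auto simp: t_def elim!: dvdE)
    have h: "fhom Qal \<sigma>" by (rule gal_aut_fhom[OF s])
    have sbK: "\<sigma> \<beta> \<in> K" using Kstab[OF s] bK' by blast
    define \<zeta> where "\<zeta> = \<sigma> \<beta> / \<beta>"
    have zK: "\<zeta> \<in> K" unfolding \<zeta>_def by (rule sf_divide[OF sfK sbK bK'])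
    have "\<zeta> ^ t = 1" using c(3) b0 by (simp add: \<zeta>_def t_def power_divide)
    then have "\<zeta> \<in> R" using zK t0 by (auto simp: R_def roots_of_unity_in_def)
    then have zm: "\<zeta> ^ m = 1" using root_unity_pow_card[OF sfK finR[unfolded R_def]] assms(5) by (simp add: R_def)
    have "\<sigma> \<gamma> = \<sigma> \<beta> ^ m" unfolding \<gamma>_def by (rule fh_power[OF Qal_subfield h bQ])
    also have "\<sigma> \<beta> = \<zeta> * \<beta>" using b0 by (simp add: \<zeta>_def)
    also have "(\<zeta> * \<beta>) ^ m = \<gamma>" using zm by (simp add: power_mult_distrib \<gamma>_def)
    finally show "\<sigma> \<in> {\<sigma>. gal_aut \<sigma> \<and> \<sigma> \<gamma> = \<gamma>}" using s by simp
  next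
    fix \<sigma> assume "\<sigma> \<in> {\<sigma>. gal_aut \<sigma> \<and> \<sigma> \<gamma> = \<gamma>}"
    then have s: "gal_aut \<sigma>" "\<sigma> \<gamma> = \<gamma>" by auto
    have h: "fhom Qal \<sigma>" by (rule gal_aut_fhom[OF s(1)])
    have "\<sigma> \<beta> ^ m = \<beta> ^ m" using s(2) fh_power[OF Qal_subfield h bQ, of m] by (simp add: \<gamma>_def)
    moreover have "m * n div n = m" using assms(3) by simp
    ultimately have "lim_eq (n, \<sigma> (\<pi> ^ n)) (n, \<pi> ^ n)"
      unfolding lim_eq_def using m0 assms(3) by (intro exI[of _ "m * n"]) (simp add: \<beta>_def)
    then show "\<sigma> \<in> stabilizer n \<pi>" using s by (simp add: stabilizer_def)
  qed
  then show ?thesis using galois_fixed[OF gQ] gamma by simp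
qed

end
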